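(* Let $T=T((v_1,k_1),\dots,(v_l,k_l);p)$ and $S=T((v_1,k_1),\dots,(v_l,k_l);q)$ be two trees of diameter 4. Then there exists a non-negative integer $r$ such that $\mathbb{G}(R)$, where $R=T((v_1,k_1),\dots,(v_l,k_l);r)$, is isomorphic to a finite index subgroup of $\mathbb{G}(S)$ and to a finite index subgroup of $\mathbb{G}(T)$. In particular, $\mathbb{G}(S)$ and $\mathbb{G}(T)$ are commensurable.
   Context: For a finite simplicial graph $\Gamma$, $\mathbb{G}(\Gamma)$ is the right-angled Artin group with generators the vertices of $\Gamma$ and relations $[u,v]=1$ for each edge. Two groups are commensurable if they have isomorphic finite index subgroups. Encoding of trees of diameter 4: in a finite tree of diameter 4 the middle vertex of any path of length 4 is the same vertex $c$, the center; leaves adjacent to $c$ are hair vertices; other neighbours of $c$ are pivots. $T((d_1,k_1),\dots,(d_l,k_l);q)$ is the tree of diameter 4 with exactly $q\ge0$ hair vertices and, for each $i$, exactly $k_i$ pivots adjacent to exactly $d_i$ leaves, where $l,d_i,k_i$ are positive integers, $d_1<\dots<d_l$, and either $l\ge2$ or ($l=1$ and $k_1\ge2$). *)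

theory Defs
  imports "HOL-Algebra.Algebra"
begin

text \<open>The RAAG G(V,E) is the group presented by generators V and relations [u,v]=1 for
  edges uv.  Concretely: words over letters (v, sign) with v in V (sign True = v,
  False = v^-1), modulo the equivalence generated by free cancellation / insertion
  of x^e x^-e and by swapping adjacent letters whose vertices are joined by an edge.\<close>

inductive raag_step :: "'v set \<Rightarrow> ('v \<Rightarrow> 'v \<Rightarrow> bool) \<Rightarrow> ('v \<times> bool) list \<Rightarrow> ('v \<times> bool) list \<Rightarrow> bool"
  for V E where
  cancel: "x \<in> V \<Longrightarrow> raag_step V E (u @ [(x, b), (x, \<not> b)] @ w) (u @ w)"
| swap: "E x y \<Longrightarrow> raag_step V E (u @ [(x, b), (y, c)] @ w) (u @ [(y, c), (x, b)] @ w)"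

definition raag_words :: "'v set \<Rightarrow> ('v \<times> bool) list set" where
  "raag_words V = lists (V \<times> UNIV)"

definition raag_rel :: "'v set \<Rightarrow> ('v \<Rightarrow> 'v \<Rightarrow> bool) \<Rightarrow> (('v \<times> bool) list \<times> ('v \<times> bool) list) set" where
  "raag_rel V E =
     ({(x, y). x \<in> raag_words V \<and> y \<in> raag_words V \<and> (raag_step V E x y \<or> raag_step V E y x)})\<^sup>*"

definition raag_mult :: "'v set \<Rightarrow> ('v \<Rightarrow> 'v \<Rightarrow> bool) \<Rightarrow> ('v \<times> bool) list set \<Rightarrow> ('v \<times> bool) list set \<Rightarrow> ('v \<times> bool) list set" where
  "raag_mult V E A B = raag_rel V E `` {z. \<exists>a\<in>A. \<exists>b\<in>B. z = a @ b}"

definition raag :: "'v set \<Rightarrow> ('v \<Rightarrow> 'v \<Rightarrow> bool) \<Rightarrow> ('v \<times> bool) list set monoid" where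
  "raag V E =
     \<lparr> carrier = raag_words V // raag_rel V E,
       Group.monoid.mult = raag_mult V E,
       one = raag_rel V E `` {[]} \<rparr>"

definition finite_index_subgroup :: "'a set \<Rightarrow> ('a, 'b) monoid_scheme \<Rightarrow> bool" where
  "finite_index_subgroup H G \<longleftrightarrow> subgroup H G \<and> finite (rcosets\<^bsub>G\<^esub> H)"

definition iso_to_finite_index_subgroup :: "('a, 'c) monoid_scheme \<Rightarrow> ('b, 'd) monoid_scheme \<Rightarrow> bool" where
  "iso_to_finite_index_subgroup A G \<longleftrightarrow>
     (\<exists>H. finite_index_subgroup H G \<and> A \<cong> G\<lparr>carrier := H\<rparr>)"

definition commensurable :: "('a, 'c) monoid_scheme \<Rightarrow> ('b, 'd) monoid_scheme \<Rightarrow> bool" where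
  "commensurable G H \<longleftrightarrow>
     (\<exists>A B. finite_index_subgroup A G \<and> finite_index_subgroup B H \<and>
            G\<lparr>carrier := A\<rparr> \<cong> H\<lparr>carrier := B\<rparr>)"

text \<open>Concrete model of T((d_1,k_1),...,(d_l,k_l); q), with the parameter list
  ds = [(d_1,k_1),...,(d_l,k_l)] (0-indexed): center C, hair vertices Hair h (h < q),
  pivots Piv i j (i < l, j < k_i), leaves Leaf i j m (m < d_i) attached to Piv i j.\<close>

datatype tvert = Ctr | Hair nat | Piv nat nat | Leaf nat nat nat

definition tree_V :: "(nat \<times> nat) list \<Rightarrow> nat \<Rightarrow> tvert set" where
  "tree_V ds q =
     {Ctr} \<union> {Hair h | h. h < q}
     \<union> {Piv i j | i j. i < length ds \<and> j < snd (ds ! i)}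
     \<union> {Leaf i j m | i j m. i < length ds \<and> j < snd (ds ! i) \<and> m < fst (ds ! i)}"

definition tree_E0 :: "(nat \<times> nat) list \<Rightarrow> nat \<Rightarrow> tvert \<Rightarrow> tvert \<Rightarrow> bool" where
  "tree_E0 ds q x y \<longleftrightarrow>
     (\<exists>h. h < q \<and> x = Ctr \<and> y = Hair h)
   \<or> (\<exists>i j. i < length ds \<and> j < snd (ds ! i) \<and> x = Ctr \<and> y = Piv i j)
   \<or> (\<exists>i j m. i < length ds \<and> j < snd (ds ! i) \<and> m < fst (ds ! i) \<and> x = Piv i j \<and> y = Leaf i j m)"

definition tree_E :: "(nat \<times> nat) list \<Rightarrow> nat \<Rightarrow> tvert \<Rightarrow> tvert \<Rightarrow> bool" where
  "tree_E ds q x y \<longleftrightarrow> tree_E0 ds q x y \<or> tree_E0 ds q y x"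

definition valid_params :: "(nat \<times> nat) list \<Rightarrow> bool" where
  "valid_params ds \<longleftrightarrow>
     ds \<noteq> [] \<and> (\<forall>(d, k) \<in> set ds. 0 < d \<and> 0 < k) \<and>
     sorted_wrt (<) (map fst ds) \<and> (2 \<le> length ds \<or> 2 \<le> snd (hd ds))"

definition tree_raag :: "(nat \<times> nat) list \<Rightarrow> nat \<Rightarrow> (tvert \<times> bool) list set monoid" where
  "tree_raag ds q = raag (tree_V ds q) (tree_E ds q)"

end

theory Submission
  imports Defs
begin


definition invw :: "('v \<times> bool) list \<Rightarrow> ('v \<times> bool) list" where
  "invw w = rev (map (\<lambda>(x,b). (x, \<not> b)) w)"

lemma invw_Nil[simp]: "invw [] = []" by (simp add: invw_def)
lemma invw_Cons[simp]: "invw ((x,b) # w) = invw w @ [(x, \<not> b)]" by (simp add: invw_def)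
lemma invw_append[simp]: "invw (u @ v) = invw v @ invw u" by (simp add: invw_def)
lemma invw_invw[simp]: "invw (invw w) = w" by (induct w) (auto simp: invw_def)
lemma invw_single[simp]: "invw [(x,b)] = [(x,\<not>b)]" by (simp add: invw_def)
lemma invw_replicate[simp]: "invw (replicate k (x, b)) = replicate k (x, \<not> b)"
  by (induct k) (auto simp: invw_def replicate_append_same)

lemma set_invw: "(y, c) \<in> set (invw w) \<longleftrightarrow> (y, \<not> c) \<in> set w"
  by (force simp: invw_def image_iff)
lemma fst_set_invw[simp]: "fst ` set (invw w) = fst ` set w"
  by (force simp: invw_def image_iff)

lemma words_iff: "w \<in> raag_words V \<longleftrightarrow> fst ` set w \<subseteq> V"
  by (auto simp: raag_words_def)
lemma words_append[simp]: "u @ v \<in> raag_words V \<longleftrightarrow> u \<in> raag_words V \<and> v \<in> raag_words V"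
  by (auto simp: words_iff)
lemma words_Cons[simp]: "(x,b) # v \<in> raag_words V \<longleftrightarrow> x \<in> V \<and> v \<in> raag_words V"
  by (auto simp: words_iff)
lemma words_Nil[simp]: "[] \<in> raag_words V" by (auto simp: words_iff)
lemma words_invw[simp]: "invw w \<in> raag_words V \<longleftrightarrow> w \<in> raag_words V"
  by (simp add: words_iff)
lemma words_replicate[simp]: "replicate n (x,b) \<in> raag_words V \<longleftrightarrow> n = 0 \<or> x \<in> V"
  by (induct n) auto

lemma rel_refl[simp]: "(w, w) \<in> raag_rel V E"
  by (simp add: raag_rel_def)

lemma rel_sym: "(x, y) \<in> raag_rel V E \<Longrightarrow> (y, x) \<in> raag_rel V E"
proof -
  have "sym {(x, y). x \<in> raag_words V \<and> y \<in> raag_words V \<and> (raag_step V E x y \<or> raag_step V E y x)}"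
    by (auto simp: sym_def)
  then show "(x, y) \<in> raag_rel V E \<Longrightarrow> (y, x) \<in> raag_rel V E"
    unfolding raag_rel_def by (meson sym_rtrancl symD)
qed

lemma rel_trans: "(x, y) \<in> raag_rel V E \<Longrightarrow> (y, z) \<in> raag_rel V E \<Longrightarrow> (x, z) \<in> raag_rel V E"
  unfolding raag_rel_def by (meson rtrancl_trans)

lemma rel_step: "raag_step V E x y \<Longrightarrow> x \<in> raag_words V \<Longrightarrow> y \<in> raag_words V \<Longrightarrow> (x, y) \<in> raag_rel V E"
  unfolding raag_rel_def by auto

lemma rel_words: "(x, y) \<in> raag_rel V E \<Longrightarrow> x \<in> raag_words V \<longleftrightarrow> y \<in> raag_words V"
  unfolding raag_rel_def by (induct rule: rtrancl_induct) auto

lemma step_ctx: "raag_step V E x y \<Longrightarrow> raag_step V E (p @ x @ s) (p @ y @ s)"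
proof (induct rule: raag_step.induct)
  case (cancel x u b w)
  then show ?case using raag_step.cancel[where u="p @ u" and w="w @ s"] by simp
next
  case (swap x y u b c w)
  then show ?case using raag_step.swap[where u="p @ u" and w="w @ s"] by simp
qed

lemma rel_ctx: "(x, y) \<in> raag_rel V E \<Longrightarrow> p \<in> raag_words V \<Longrightarrow> s \<in> raag_words V \<Longrightarrow>
   (p @ x @ s, p @ y @ s) \<in> raag_rel V E"
  unfolding raag_rel_def
proof (induct rule: rtrancl_induct)
  case base then show ?case by simp
next
  case (step y z)
  then have "y \<in> raag_words V" "z \<in> raag_words V" "raag_step V E y z \<or> raag_step V E z y" by auto
  then have "(p @ y @ s, p @ z @ s) \<in> {(x, y). x \<in> raag_words V \<and> y \<in> raag_words V \<and> (raag_step V E x y \<or> raag_step V E y x)}"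
    using step_ctx[of V E y z p s] step_ctx[of V E z y p s] step.prems by auto
  with step show ?case by (meson rtrancl.rtrancl_into_rtrancl)
qed

lemma rel_app: "(a, a') \<in> raag_rel V E \<Longrightarrow> (b, b') \<in> raag_rel V E \<Longrightarrow> a \<in> raag_words V \<Longrightarrow> b \<in> raag_words V
  \<Longrightarrow> (a @ b, a' @ b') \<in> raag_rel V E"
proof -
  assume h: "(a, a') \<in> raag_rel V E" "(b, b') \<in> raag_rel V E" "a \<in> raag_words V" "b \<in> raag_words V"
  then have "a' \<in> raag_words V" using rel_words by blast
  have 1: "(a @ b, a' @ b) \<in> raag_rel V E" using rel_ctx[OF h(1), of "[]" b] h by simp
  have 2: "(a' @ b, a' @ b') \<in> raag_rel V E" using rel_ctx[OF h(2), of a' "[]"] h \<open>a' \<in> _\<close> by simp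
  show ?thesis using 1 2 rel_trans by blast
qed

lemma rel_app3: "(a, a') \<in> raag_rel V E \<Longrightarrow> (b, b') \<in> raag_rel V E \<Longrightarrow> (c, c') \<in> raag_rel V E
  \<Longrightarrow> a \<in> raag_words V \<Longrightarrow> b \<in> raag_words V \<Longrightarrow> c \<in> raag_words V
  \<Longrightarrow> (a @ b @ c, a' @ b' @ c') \<in> raag_rel V E"
  by (simp add: rel_app)

lemma rel_cancel1: "x \<in> V \<Longrightarrow> ([(x, b), (x, \<not> b)], []) \<in> raag_rel V E"
proof -
  assume x: "x \<in> V"
  have "raag_step V E ([] @ [(x, b), (x, \<not> b)] @ []) ([] @ [])" by (rule raag_step.cancel) fact
  then show ?thesis using x by (intro rel_step) auto
qed

lemma rel_cancel: "w \<in> raag_words V \<Longrightarrow> (w @ invw w, []) \<in> raag_rel V E"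
proof (induct w)
  case Nil then show ?case by simp
next
  case (Cons a w)
  obtain x b where a: "a = (x, b)" by (cases a)
  with Cons have xV: "x \<in> V" and wW: "w \<in> raag_words V" by auto
  have "([(x,b)] @ (w @ invw w) @ [(x, \<not> b)], [(x,b)] @ [] @ [(x, \<not> b)]) \<in> raag_rel V E"
    using rel_ctx[OF Cons(1)[OF wW], of "[(x,b)]" "[(x, \<not> b)]"] xV by simp
  then show ?case using rel_cancel1[OF xV, of b E] a by (auto intro: rel_trans)
qed

lemma rel_cancel': "w \<in> raag_words V \<Longrightarrow> (invw w @ w, []) \<in> raag_rel V E"
  using rel_cancel[of "invw w" V E] by simp

lemma rel_commute1:
  assumes "x \<in> V" "w \<in> raag_words V" "\<forall>y \<in> fst ` set w. E x y"
  shows "((x, b) # w, w @ [(x, b)]) \<in> raag_rel V E"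
  using assms
proof (induct w)
  case Nil then show ?case by simp
next
  case (Cons a w)
  obtain y c where a: "a = (y, c)" by (cases a)
  with Cons have "E x y" "y \<in> V" "w \<in> raag_words V" by auto
  have "raag_step V E ([] @ [(x, b), (y, c)] @ w) ([] @ [(y, c), (x, b)] @ w)"
    by (rule raag_step.swap) fact
  then have 1: "((x, b) # (y, c) # w, (y, c) # (x, b) # w) \<in> raag_rel V E"
    using Cons \<open>y \<in> V\<close> \<open>w \<in> _\<close> by (intro rel_step) auto
  have ih: "((x,b) # w, w @ [(x,b)]) \<in> raag_rel V E" using Cons \<open>w \<in> _\<close> by auto
  have 2: "([(y, c)] @ ((x, b) # w) @ [], [(y, c)] @ (w @ [(x, b)]) @ []) \<in> raag_rel V E"
    using rel_ctx[OF ih, of "[(y,c)]" "[]"] \<open>y \<in> V\<close> by simp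
  show ?case using 1 2 a by (auto intro: rel_trans)
qed

lemma rel_commute:
  assumes "u \<in> raag_words V" "w \<in> raag_words V" "\<forall>x \<in> fst ` set u. \<forall>y \<in> fst ` set w. E x y"
  shows "(u @ w, w @ u) \<in> raag_rel V E"
  using assms
proof (induct u)
  case Nil then show ?case by simp
next
  case (Cons a u)
  obtain x b where a: "a = (x, b)" by (cases a)
  with Cons have xV: "x \<in> V" and uW: "u \<in> raag_words V" by auto
  have ih: "(u @ w, w @ u) \<in> raag_rel V E" using Cons uW by auto
  have 1: "([(x,b)] @ (u @ w) @ [], [(x,b)] @ (w @ u) @ []) \<in> raag_rel V E"
    by (rule rel_ctx[OF ih]) (use xV in auto)
  have c1: "((x,b) # w, w @ [(x,b)]) \<in> raag_rel V E"
    by (rule rel_commute1) (use Cons xV a in auto)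
  have 2: "([] @ ((x, b) # w) @ u, [] @ (w @ [(x, b)]) @ u) \<in> raag_rel V E"
    using rel_ctx[OF c1, of "[]" u] uW by simp
  show ?case using 1 2 a by (auto intro: rel_trans)
qed

lemma step_invw:
  assumes "symp E" "raag_step V E x y" shows "raag_step V E (invw x) (invw y)"
  using assms(2)
proof (induct rule: raag_step.induct)
  case (cancel x u b w)
  then show ?case using raag_step.cancel[where u="invw w" and w="invw u"] by simp
next
  case (swap x y u b c w)
  then have "E y x" using assms(1) by (meson sympD)
  then show ?case using raag_step.swap[where u="invw w" and w="invw u" and b="\<not> c" and c="\<not> b"] by simp
qed

lemma rel_invw:
  assumes "symp E" "(x, y) \<in> raag_rel V E" shows "(invw x, invw y) \<in> raag_rel V E"
  using assms(2) unfolding raag_rel_def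
proof (induct rule: rtrancl_induct)
  case base then show ?case by simp
next
  case (step y z)
  then have "(invw y, invw z) \<in> {(x, y). x \<in> raag_words V \<and> y \<in> raag_words V \<and> (raag_step V E x y \<or> raag_step V E y x)}"
    using step_invw[OF assms(1)] by auto
  with step show ?case by (meson rtrancl.rtrancl_into_rtrancl)
qed

definition cls :: "'v set \<Rightarrow> ('v \<Rightarrow> 'v \<Rightarrow> bool) \<Rightarrow> ('v \<times> bool) list \<Rightarrow> ('v \<times> bool) list set" where
  "cls V E w = raag_rel V E `` {w}"

lemma cls_eq: "(w, w') \<in> raag_rel V E \<Longrightarrow> cls V E w = cls V E w'"
proof -
  assume h: "(w, w') \<in> raag_rel V E"
  have "(w', w) \<in> raag_rel V E" by (rule rel_sym[OF h])
  then show ?thesis unfolding cls_def using h by (auto intro: rel_trans)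
qed

lemma in_cls: "w \<in> cls V E w" by (simp add: cls_def)

lemma cls_eq_iff: "cls V E w = cls V E w' \<longleftrightarrow> (w, w') \<in> raag_rel V E"
proof
  assume "cls V E w = cls V E w'"
  then have "w' \<in> cls V E w" using in_cls[of w' V E] by simp
  then show "(w, w') \<in> raag_rel V E" by (simp add: cls_def)
qed (rule cls_eq)

lemma carrier_raag: "carrier (raag V E) = cls V E ` raag_words V"
  by (auto simp: raag_def quotient_def cls_def)

lemma one_raag: "one (raag V E) = cls V E []"
  by (simp add: raag_def cls_def)

lemma mult_raag: "a \<in> raag_words V \<Longrightarrow> b \<in> raag_words V \<Longrightarrow>
   Group.monoid.mult (raag V E) (cls V E a) (cls V E b) = cls V E (a @ b)"
proof -
  assume a: "a \<in> raag_words V" and b: "b \<in> raag_words V"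
  have "raag_mult V E (cls V E a) (cls V E b) = cls V E (a @ b)"
  proof
    show "raag_mult V E (cls V E a) (cls V E b) \<subseteq> cls V E (a @ b)"
    proof
      fix z assume "z \<in> raag_mult V E (cls V E a) (cls V E b)"
      then obtain a' b' where "(a, a') \<in> raag_rel V E" "(b, b') \<in> raag_rel V E"
        "(a' @ b', z) \<in> raag_rel V E"
        unfolding raag_mult_def cls_def by auto
      then have "(a @ b, z) \<in> raag_rel V E" using rel_app a b rel_trans by blast
      then show "z \<in> cls V E (a @ b)" by (simp add: cls_def)
    qed
  next
    show "cls V E (a @ b) \<subseteq> raag_mult V E (cls V E a) (cls V E b)"
      unfolding raag_mult_def cls_def by force
  qed
  then show ?thesis by (simp add: raag_def)
qed

lemma cls_in_carrier: "w \<in> raag_words V \<Longrightarrow> cls V E w \<in> carrier (raag V E)"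
  by (simp add: carrier_raag)

lemma raag_group: "group (raag V E)"
proof (rule groupI)
  fix x y assume "x \<in> carrier (raag V E)" "y \<in> carrier (raag V E)"
  then show "x \<otimes>\<^bsub>raag V E\<^esub> y \<in> carrier (raag V E)"
    by (auto simp: carrier_raag mult_raag)
next
  show "\<one>\<^bsub>raag V E\<^esub> \<in> carrier (raag V E)" by (simp add: one_raag carrier_raag)
next
  fix x y z assume "x \<in> carrier (raag V E)" "y \<in> carrier (raag V E)" "z \<in> carrier (raag V E)"
  then show "x \<otimes>\<^bsub>raag V E\<^esub> y \<otimes>\<^bsub>raag V E\<^esub> z = x \<otimes>\<^bsub>raag V E\<^esub> (y \<otimes>\<^bsub>raag V E\<^esub> z)"
    by (auto simp: carrier_raag mult_raag)
next
  fix x assume "x \<in> carrier (raag V E)"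
  then show "\<one>\<^bsub>raag V E\<^esub> \<otimes>\<^bsub>raag V E\<^esub> x = x"
    by (auto simp: carrier_raag mult_raag one_raag)
next
  fix x assume "x \<in> carrier (raag V E)"
  then obtain w where w: "w \<in> raag_words V" "x = cls V E w" by (auto simp: carrier_raag)
  then have "cls V E (invw w) \<otimes>\<^bsub>raag V E\<^esub> x = \<one>\<^bsub>raag V E\<^esub>"
    using rel_cancel'[of w V E] by (simp add: mult_raag one_raag cls_eq)
  then show "\<exists>y\<in>carrier (raag V E). y \<otimes>\<^bsub>raag V E\<^esub> x = \<one>\<^bsub>raag V E\<^esub>"
    using w by (intro bexI[of _ "cls V E (invw w)"]) (auto simp: carrier_raag)
qed


fun Rs :: "('s \<Rightarrow> 'v \<times> bool \<Rightarrow> ('u \<times> bool) list) \<Rightarrow> ('s \<Rightarrow> 'v \<times> bool \<Rightarrow> 's) \<Rightarrow> 's \<Rightarrow> ('v \<times> bool) list \<Rightarrow> ('u \<times> bool) list" where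
  "Rs out nxt s [] = []"
| "Rs out nxt s (a # w) = out s a @ Rs out nxt (nxt s a) w"

lemma Rs_append[simp]: "Rs out nxt s (u @ v) = Rs out nxt s u @ Rs out nxt (foldl nxt s u) v"
  by (induct u arbitrary: s) auto

definition hmapg :: "'u set \<Rightarrow> ('u \<Rightarrow> 'u \<Rightarrow> bool) \<Rightarrow> ('s \<Rightarrow> 'v \<times> bool \<Rightarrow> ('u \<times> bool) list) \<Rightarrow> ('s \<Rightarrow> 'v \<times> bool \<Rightarrow> 's) \<Rightarrow> 's \<Rightarrow> ('v \<times> bool) list set \<Rightarrow> ('u \<times> bool) list set" where
  "hmapg W F ou nx s0 A = raag_rel W F `` (Rs ou nx s0 ` A)"

locale xfer =
  fixes V :: "'v set" and E :: "'v \<Rightarrow> 'v \<Rightarrow> bool" and V' :: "'u set" and E' :: "'u \<Rightarrow> 'u \<Rightarrow> bool"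
    and Sx :: "'s set" and out :: "'s \<Rightarrow> 'v \<times> bool \<Rightarrow> ('u \<times> bool) list" and nxt :: "'s \<Rightarrow> 'v \<times> bool \<Rightarrow> 's"
  assumes S_nxt: "s \<in> Sx \<Longrightarrow> x \<in> V \<Longrightarrow> nxt s (x, b) \<in> Sx"
    and out_W: "s \<in> Sx \<Longrightarrow> x \<in> V \<Longrightarrow> out s (x, b) \<in> raag_words V'"
    and canc: "s \<in> Sx \<Longrightarrow> x \<in> V \<Longrightarrow> nxt (nxt s (x, b)) (x, \<not> b) = s"
    and canc_rel: "s \<in> Sx \<Longrightarrow> x \<in> V \<Longrightarrow> (out s (x, b) @ out (nxt s (x, b)) (x, \<not> b), []) \<in> raag_rel V' E'"
    and swp: "s \<in> Sx \<Longrightarrow> E x y \<Longrightarrow> x \<in> V \<Longrightarrow> y \<in> V \<Longrightarrow> nxt (nxt s (x, b)) (y, c) = nxt (nxt s (y, c)) (x, b)"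
    and swp_rel: "s \<in> Sx \<Longrightarrow> E x y \<Longrightarrow> x \<in> V \<Longrightarrow> y \<in> V \<Longrightarrow>
       (out s (x, b) @ out (nxt s (x, b)) (y, c), out s (y, c) @ out (nxt s (y, c)) (x, b)) \<in> raag_rel V' E'"
begin

lemma st_S: "s \<in> Sx \<Longrightarrow> w \<in> raag_words V \<Longrightarrow> foldl nxt s w \<in> Sx"
proof (induct w arbitrary: s)
  case (Cons a w) then show ?case by (cases a) (auto intro: S_nxt)
qed simp

lemma Rs_W: "s \<in> Sx \<Longrightarrow> w \<in> raag_words V \<Longrightarrow> Rs out nxt s w \<in> raag_words V'"
proof (induct w arbitrary: s)
  case (Cons a w) then show ?case by (cases a) (auto intro: S_nxt out_W)
qed simp

lemma step_xfer:
  assumes "raag_step V E w w'" "w \<in> raag_words V" "w' \<in> raag_words V" "s \<in> Sx"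
  shows "(Rs out nxt s w, Rs out nxt s w') \<in> raag_rel V' E' \<and> foldl nxt s w = foldl nxt s w'"
  using assms(1)
proof cases
  case (cancel x u b v)
  let ?s1 = "foldl nxt s u"
  have uW: "u \<in> raag_words V" and vW: "v \<in> raag_words V" using assms(2) cancel by auto
  have s1: "?s1 \<in> Sx" using st_S[OF assms(4) uW] .
  have e: "nxt (nxt ?s1 (x, b)) (x, \<not> b) = ?s1" using canc[OF s1 cancel(3)] .
  have "(Rs out nxt s u @ (out ?s1 (x, b) @ out (nxt ?s1 (x, b)) (x, \<not> b)) @ Rs out nxt ?s1 v,
         Rs out nxt s u @ [] @ Rs out nxt ?s1 v) \<in> raag_rel V' E'"
    by (rule rel_ctx[OF canc_rel[OF s1 cancel(3)]]) (simp_all add: Rs_W[OF assms(4) uW] Rs_W[OF s1 vW])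
  then show ?thesis using cancel e by simp
next
  case (swap x y u b c v)
  let ?s1 = "foldl nxt s u"
  have uW: "u \<in> raag_words V" and vW: "v \<in> raag_words V" and xV: "x \<in> V" and yV: "y \<in> V"
    using assms(2) swap by auto
  have s1: "?s1 \<in> Sx" using st_S[OF assms(4) uW] .
  have e: "nxt (nxt ?s1 (x, b)) (y, c) = nxt (nxt ?s1 (y, c)) (x, b)" using swp[OF s1 swap(3) xV yV] .
  have s2: "nxt (nxt ?s1 (x, b)) (y, c) \<in> Sx" using s1 xV yV by (auto intro: S_nxt)
  have "(Rs out nxt s u @ (out ?s1 (x, b) @ out (nxt ?s1 (x, b)) (y, c)) @ Rs out nxt (nxt (nxt ?s1 (x, b)) (y, c)) v,
         Rs out nxt s u @ (out ?s1 (y, c) @ out (nxt ?s1 (y, c)) (x, b)) @ Rs out nxt (nxt (nxt ?s1 (x, b)) (y, c)) v) \<in> raag_rel V' E'"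
    by (rule rel_ctx[OF swp_rel[OF s1 swap(3) xV yV]]) (simp_all add: Rs_W[OF assms(4) uW] Rs_W[OF s2 vW])
  then show ?thesis using swap e by simp
qed

lemma rel_xfer:
  assumes "(w, w') \<in> raag_rel V E" "w \<in> raag_words V" "s \<in> Sx"
  shows "(Rs out nxt s w, Rs out nxt s w') \<in> raag_rel V' E' \<and> foldl nxt s w = foldl nxt s w'"
proof -
  from assms(1) have "(w, w') \<in> {(x, y). x \<in> raag_words V \<and> y \<in> raag_words V \<and> (raag_step V E x y \<or> raag_step V E y x)}\<^sup>*"
    unfolding raag_rel_def .
  then show ?thesis
  proof (induct rule: rtrancl_induct)
    case base then show ?case by simp
  next
    case (step y z)
    then have yz: "y \<in> raag_words V" "z \<in> raag_words V" "raag_step V E y z \<or> raag_step V E z y" by auto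
    have "(Rs out nxt s y, Rs out nxt s z) \<in> raag_rel V' E' \<and> foldl nxt s y = foldl nxt s z"
      using yz(3)
    proof
      assume "raag_step V E y z" then show ?thesis using step_xfer[of y z s] yz assms(3) by blast
    next
      assume "raag_step V E z y"
      then have "(Rs out nxt s z, Rs out nxt s y) \<in> raag_rel V' E' \<and> foldl nxt s z = foldl nxt s y"
        using step_xfer[of z y s] yz assms(3) by blast
      then show ?thesis using rel_sym by metis
    qed
    then show ?case using step(3) rel_trans[of "Rs out nxt s w" "Rs out nxt s y" V' E' "Rs out nxt s z"]
      by auto
  qed
qed

abbreviation "hmap s0 \<equiv> hmapg V' E' out nxt s0"

lemma hmap_cls: "s0 \<in> Sx \<Longrightarrow> w \<in> raag_words V \<Longrightarrow> hmap s0 (cls V E w) = cls V' E' (Rs out nxt s0 w)"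
proof -
  assume s0: "s0 \<in> Sx" and w: "w \<in> raag_words V"
  show ?thesis
  proof
    show "hmap s0 (cls V E w) \<subseteq> cls V' E' (Rs out nxt s0 w)"
    proof
      fix z assume "z \<in> hmap s0 (cls V E w)"
      then obtain w1 where "(w, w1) \<in> raag_rel V E" "(Rs out nxt s0 w1, z) \<in> raag_rel V' E'"
        unfolding hmapg_def cls_def by auto
      then show "z \<in> cls V' E' (Rs out nxt s0 w)"
        using rel_xfer[of w w1 s0] s0 w rel_trans unfolding cls_def by blast
    qed
  next
    show "cls V' E' (Rs out nxt s0 w) \<subseteq> hmap s0 (cls V E w)"
      unfolding hmapg_def cls_def by auto
  qed
qed

lemma hmap_hom:
  assumes triv: "\<And>s a. nxt s a = s" and s0: "s0 \<in> Sx"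
  shows "hmap s0 \<in> hom (raag V E) (raag V' E')"
proof (rule homI)
  fix x assume "x \<in> carrier (raag V E)"
  then obtain w where "w \<in> raag_words V" "x = cls V E w" by (auto simp: carrier_raag)
  then show "hmap s0 x \<in> carrier (raag V' E')"
    using hmap_cls[OF s0] Rs_W[OF s0] by (simp add: cls_in_carrier)
next
  fix x y assume "x \<in> carrier (raag V E)" "y \<in> carrier (raag V E)"
  then obtain u v where "u \<in> raag_words V" "x = cls V E u" "v \<in> raag_words V" "y = cls V E v"
    by (auto simp: carrier_raag)
  moreover have "foldl nxt s0 u = s0" using triv by (induct u) auto
  ultimately show "hmap s0 (x \<otimes>\<^bsub>raag V E\<^esub> y) = hmap s0 x \<otimes>\<^bsub>raag V' E'\<^esub> hmap s0 y"
    using hmap_cls[OF s0] Rs_W[OF s0] by (simp add: mult_raag)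
qed

end


locale rg = fixes V :: "'v set" and E :: "'v \<Rightarrow> 'v \<Rightarrow> bool"
begin

sublocale grp: group "raag V E" by (rule raag_group)

lemma cls_carr[simp]: "w \<in> raag_words V \<Longrightarrow> cls V E w \<in> carrier (raag V E)"
  by (rule cls_in_carrier)

lemma cls_app: "a \<in> raag_words V \<Longrightarrow> b \<in> raag_words V \<Longrightarrow>
    cls V E (a @ b) = cls V E a \<otimes>\<^bsub>raag V E\<^esub> cls V E b"
  by (simp add: mult_raag)

lemma cls_Cons: "w \<noteq> [] \<Longrightarrow> x \<in> V \<Longrightarrow> w \<in> raag_words V \<Longrightarrow>
    cls V E ((x, b) # w) = cls V E [(x, b)] \<otimes>\<^bsub>raag V E\<^esub> cls V E w"
  using cls_app[of "[(x, b)]" w] by simp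

lemma cls_Nil: "cls V E [] = \<one>\<^bsub>raag V E\<^esub>" by (simp add: one_raag)

lemma cls_invw: "a \<in> raag_words V \<Longrightarrow> cls V E (invw a) = inv\<^bsub>raag V E\<^esub> (cls V E a)"
proof -
  assume a: "a \<in> raag_words V"
  have "cls V E (invw a) \<otimes>\<^bsub>raag V E\<^esub> cls V E a = \<one>\<^bsub>raag V E\<^esub>"
    using a rel_cancel'[of a V E] by (simp add: mult_raag one_raag cls_eq)
  then show ?thesis using a by (simp add: grp.inv_equality)
qed

lemma cls_comm: "u \<in> raag_words V \<Longrightarrow> w \<in> raag_words V \<Longrightarrow> \<forall>x \<in> fst ` set u. \<forall>y \<in> fst ` set w. E x y \<Longrightarrow>
  cls V E u \<otimes>\<^bsub>raag V E\<^esub> cls V E w = cls V E w \<otimes>\<^bsub>raag V E\<^esub> cls V E u"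
  using rel_commute[of u V w E] by (simp add: mult_raag cls_eq)

lemma cls_neg: "x \<in> V \<Longrightarrow> cls V E [(x, False)] = inv\<^bsub>raag V E\<^esub> cls V E [(x, True)]"
  using cls_invw[of "[(x, True)]"] by simp

lemma cls_rep: "x \<in> V \<Longrightarrow> cls V E (replicate k (x, True)) = cls V E [(x, True)] [^]\<^bsub>raag V E\<^esub> k"
proof (induct k)
  case 0 then show ?case by (simp add: cls_Nil)
next
  case (Suc k)
  have "replicate (Suc k) (x, True) = replicate k (x, True) @ [(x, True)]" by (simp add: replicate_append_same)
  then show ?case using Suc by (simp add: cls_app grp.nat_pow_Suc)
qed

lemma cls_repF: "x \<in> V \<Longrightarrow> cls V E (replicate k (x, False)) = inv\<^bsub>raag V E\<^esub> (cls V E [(x, True)] [^]\<^bsub>raag V E\<^esub> k)"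
proof -
  assume x: "x \<in> V"
  have "invw (replicate k (x, True)) = replicate k (x, False)" by (induct k) (auto simp: invw_def replicate_append_same)
  then show ?thesis using cls_invw[of "replicate k (x, True)"] cls_rep[OF x, of k] x by simp
qed

lemma canc1[simp]: "a \<in> carrier (raag V E) \<Longrightarrow> z \<in> carrier (raag V E) \<Longrightarrow>
  a \<otimes>\<^bsub>raag V E\<^esub> (inv\<^bsub>raag V E\<^esub> a \<otimes>\<^bsub>raag V E\<^esub> z) = z"
  by (simp add: grp.m_assoc[symmetric])

lemma canc2[simp]: "a \<in> carrier (raag V E) \<Longrightarrow> z \<in> carrier (raag V E) \<Longrightarrow>
  inv\<^bsub>raag V E\<^esub> a \<otimes>\<^bsub>raag V E\<^esub> (a \<otimes>\<^bsub>raag V E\<^esub> z) = z"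
  by (simp add: grp.m_assoc[symmetric])

lemma pair_canc: "x \<in> V \<Longrightarrow> cls V E [(x, b)] \<otimes>\<^bsub>raag V E\<^esub> cls V E [(x, \<not> b)] = \<one>\<^bsub>raag V E\<^esub>"
  using rel_cancel1[of x V b E] by (simp add: cls_app[symmetric] cls_Nil cls_eq)

lemma pair_canc'[simp]: "x \<in> V \<Longrightarrow> z \<in> carrier (raag V E) \<Longrightarrow>
   cls V E [(x, b)] \<otimes>\<^bsub>raag V E\<^esub> (cls V E [(x, \<not> b)] \<otimes>\<^bsub>raag V E\<^esub> z) = z"
  by (simp add: grp.m_assoc[symmetric] pair_canc)

lemma conj_flip: "x1 \<in> carrier (raag V E) \<Longrightarrow> a1 \<in> carrier (raag V E) \<Longrightarrow> b1 \<in> carrier (raag V E) \<Longrightarrow>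
  x1 \<otimes>\<^bsub>raag V E\<^esub> a1 = b1 \<otimes>\<^bsub>raag V E\<^esub> x1 \<Longrightarrow>
  inv\<^bsub>raag V E\<^esub> x1 \<otimes>\<^bsub>raag V E\<^esub> b1 = a1 \<otimes>\<^bsub>raag V E\<^esub> inv\<^bsub>raag V E\<^esub> x1"
  by (metis grp.inv_closed grp.inv_solve_left' grp.inv_solve_right' grp.m_assoc grp.m_closed)

lemma rel_iff: "(u, v) \<in> raag_rel V E \<longleftrightarrow> cls V E u = cls V E v"
  by (simp add: cls_eq_iff)

end

lemma Rs_invw:
  assumes inv_out: "\<And>s x b. s \<in> Sx \<Longrightarrow> x \<in> V \<Longrightarrow> out (nxt s (x, b)) (x, \<not> b) = invw (out s (x, b))"
    and inv_nxt: "\<And>s x b. s \<in> Sx \<Longrightarrow> x \<in> V \<Longrightarrow> nxt (nxt s (x, b)) (x, \<not> b) = s"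
    and S_nxt: "\<And>s x b. s \<in> Sx \<Longrightarrow> x \<in> V \<Longrightarrow> nxt s (x, b) \<in> Sx"
  shows "s \<in> Sx \<Longrightarrow> w \<in> raag_words V \<Longrightarrow>
     Rs out nxt (foldl nxt s w) (invw w) = invw (Rs out nxt s w) \<and> foldl nxt (foldl nxt s w) (invw w) = s"
proof (induct w arbitrary: s)
  case Nil then show ?case by simp
next
  case (Cons a w)
  obtain x b where a: "a = (x, b)" by (cases a)
  with Cons have x: "x \<in> V" and w: "w \<in> raag_words V" by auto
  let ?s1 = "nxt s (x, b)"
  have s1: "?s1 \<in> Sx" using S_nxt Cons x by blast
  have ih: "Rs out nxt (foldl nxt ?s1 w) (invw w) = invw (Rs out nxt ?s1 w) \<and> foldl nxt (foldl nxt ?s1 w) (invw w) = ?s1"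
    using Cons(1)[OF s1 w] .
  show ?case using ih a inv_out[OF Cons.prems(1) x, of b] inv_nxt[OF Cons.prems(1) x, of b] by simp
qed


definition P0 :: tvert where "P0 = Piv 0 0"

definition pivs :: "(nat \<times> nat) list \<Rightarrow> tvert set" where
  "pivs ds = {Piv i j | i j. i < length ds \<and> j < snd (ds ! i)}"

definition HS :: "(nat \<times> nat) list \<Rightarrow> nat \<Rightarrow> nat \<Rightarrow> (tvert \<times> nat) set" where
  "HS ds q n = {(Q, s). Q \<in> pivs ds \<and> Q \<noteq> P0 \<and> s < n - 1} \<union> {(Hair h, s) | h s. h < q \<and> s < n}"

definition pw :: "nat \<Rightarrow> bool \<Rightarrow> (tvert \<times> bool) list" where
  "pw k b = replicate k (P0, b)"

lemma V_Ctr[simp]: "Ctr \<in> tree_V ds q" by (simp add: tree_V_def)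
lemma V_Hair[simp]: "Hair h \<in> tree_V ds q \<longleftrightarrow> h < q" by (auto simp: tree_V_def)
lemma V_Piv[simp]: "Piv i j \<in> tree_V ds q \<longleftrightarrow> i < length ds \<and> j < snd (ds ! i)" by (auto simp: tree_V_def)
lemma V_Leaf[simp]: "Leaf i j m \<in> tree_V ds q \<longleftrightarrow> i < length ds \<and> j < snd (ds ! i) \<and> m < fst (ds ! i)"
  by (auto simp: tree_V_def)

lemma pivs_iff: "Q \<in> pivs ds \<longleftrightarrow> (\<exists>i j. Q = Piv i j \<and> Piv i j \<in> tree_V ds q)"
  by (auto simp: pivs_def)

lemma E0_simps[simp]:
  "tree_E0 ds q Ctr (Hair h) \<longleftrightarrow> h < q"
  "tree_E0 ds q Ctr (Piv i j) \<longleftrightarrow> i < length ds \<and> j < snd (ds ! i)"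
  "tree_E0 ds q (Piv i j) (Leaf i' j' m) \<longleftrightarrow> i' = i \<and> j' = j \<and> i < length ds \<and> j < snd (ds ! i) \<and> m < fst (ds ! i)"
  "\<not> tree_E0 ds q x Ctr"
  "\<not> tree_E0 ds q (Hair h) y"
  "\<not> tree_E0 ds q (Leaf i j m) y"
  "\<not> tree_E0 ds q Ctr Ctr"
  "\<not> tree_E0 ds q Ctr (Leaf i j m)"
  "\<not> tree_E0 ds q (Piv i j) (Hair h)"
  "\<not> tree_E0 ds q (Piv i j) (Piv i' j')"
  by (auto simp: tree_E0_def)

lemma symp_tree_E: "symp (tree_E ds q)"
  by (auto simp: symp_def tree_E_def)

locale cfg =
  fixes ds :: "(nat \<times> nat) list" and q n :: nat and enc :: "tvert \<times> nat \<Rightarrow> nat"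
  assumes valid: "valid_params ds" and npos: "0 < n"
    and enc_bij: "bij_betw enc (HS ds q n) {..<card (HS ds q n)}"
begin

abbreviation "rr \<equiv> card (HS ds q n)"

definition dec :: "nat \<Rightarrow> tvert \<times> nat" where "dec = inv_into (HS ds q n) enc"

lemma P0_V[simp]: "P0 \<in> tree_V ds q'"
  using valid by (cases ds) (auto simp: P0_def valid_params_def)

lemma P0_piv[simp]: "P0 \<in> pivs ds"
  using P0_V[of 0] by (simp add: P0_def pivs_def)

lemma enc_lt: "x \<in> HS ds q n \<Longrightarrow> enc x < rr"
  using enc_bij by (auto simp: bij_betw_def)

lemma dec_enc[simp]: "x \<in> HS ds q n \<Longrightarrow> dec (enc x) = x"
  using enc_bij by (simp add: dec_def bij_betw_def)

lemma dec_HS: "k < rr \<Longrightarrow> dec k \<in> HS ds q n"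
  using enc_bij unfolding dec_def bij_betw_def by (metis inv_into_into lessThan_iff)

lemma enc_dec: "k < rr \<Longrightarrow> enc (dec k) = k"
  using enc_bij unfolding dec_def bij_betw_def by (simp add: f_inv_into_f)

lemma HS_hair: "h < q \<Longrightarrow> s < n \<Longrightarrow> (Hair h, s) \<in> HS ds q n"
  by (simp add: HS_def)

lemma HS_piv: "Q \<in> pivs ds \<Longrightarrow> Q \<noteq> P0 \<Longrightarrow> s < n - 1 \<Longrightarrow> (Q, s) \<in> HS ds q n"
  by (simp add: HS_def)

definition nl :: nat where "nl = n - 1"
definition sc :: "nat \<Rightarrow> nat" where "sc s = Suc s mod n"
definition pr :: "nat \<Rightarrow> nat" where "pr s = (s + n - 1) mod n"

definition Yw :: "tvert \<Rightarrow> nat \<Rightarrow> (tvert \<times> bool) list" where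
  "Yw Q s = (if Q = P0 then [] else map (\<lambda>t. (Hair (enc (Q, t)), True)) [0..<s])"

definition Xw :: "tvert \<Rightarrow> nat \<Rightarrow> (tvert \<times> bool) list" where
  "Xw Q s = (if s < nl then (if Q = P0 then [] else [(Hair (enc (Q, s)), True)])
             else invw (Yw Q nl) @ [(Q, True)])"

definition nx :: "nat \<Rightarrow> tvert \<times> bool \<Rightarrow> nat" where
  "nx s a = (case a of (Piv i j, b) \<Rightarrow> if b then sc s else pr s | _ \<Rightarrow> s)"

definition ot :: "nat \<Rightarrow> tvert \<times> bool \<Rightarrow> (tvert \<times> bool) list" where
  "ot s a = (case a of (Ctr, b) \<Rightarrow> [(Ctr, b)]
     | (Hair h, b) \<Rightarrow> [(Hair (enc (Hair h, s)), b)]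
     | (Leaf i j m, b) \<Rightarrow> invw (Yw (Piv i j) s) @ [(Leaf i j m, b)] @ Yw (Piv i j) s
     | (Piv i j, b) \<Rightarrow> if b then Xw (Piv i j) s else invw (Xw (Piv i j) (pr s)))"

lemma nx_simps[simp]:
  "nx s (Ctr, b) = s" "nx s (Hair h, b) = s" "nx s (Leaf i j m, b) = s"
  "nx s (Piv i j, True) = sc s" "nx s (Piv i j, False) = pr s"
  by (simp_all add: nx_def)

lemma ot_simps[simp]:
  "ot s (Ctr, b) = [(Ctr, b)]" "ot s (Hair h, b) = [(Hair (enc (Hair h, s)), b)]"
  "ot s (Leaf i j m, b) = invw (Yw (Piv i j) s) @ [(Leaf i j m, b)] @ Yw (Piv i j) s"
  "ot s (Piv i j, True) = Xw (Piv i j) s"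
  "ot s (Piv i j, False) = invw (Xw (Piv i j) (pr s))"
  by (simp_all add: ot_def)

lemma nl_lt[simp]: "nl < n" using npos by (simp add: nl_def)

lemma sc_eq: "s < n \<Longrightarrow> sc s = (if s = nl then 0 else Suc s)"
  by (auto simp: sc_def nl_def mod_if)

lemma pr_eq: "s < n \<Longrightarrow> pr s = (if s = 0 then nl else s - 1)"
proof -
  assume s: "s < n"
  show ?thesis
  proof (cases "s = 0")
    case True then show ?thesis using npos by (simp add: pr_def nl_def)
  next
    case False
    then have "s + n - 1 = (s - 1) + n" by simp
    then have "(s + n - 1) mod n = ((s - 1) + n) mod n" by (simp only:)
    also have "\<dots> = s - 1" using s by simp
    finally show ?thesis using False by (simp add: pr_def)
  qed
qed

lemma sc_lt[simp]: "sc s < n" using npos by (simp add: sc_def)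
lemma pr_lt[simp]: "pr s < n" using npos by (simp add: pr_def)

lemma sc_pr[simp]: "s < n \<Longrightarrow> sc (pr s) = s"
  using pr_lt[of s] by (auto simp: sc_eq pr_eq nl_def)

lemma pr_sc[simp]: "s < n \<Longrightarrow> pr (sc s) = s"
  using sc_lt[of s] by (auto simp: sc_eq pr_eq nl_def)

lemma nx_lt: "s < n \<Longrightarrow> nx s a < n"
  by (cases a; cases "fst a"; auto simp: nx_def)

lemma nx_inv: "s < n \<Longrightarrow> nx (nx s (x, b)) (x, \<not> b) = s"
  by (cases x; cases b) auto

lemma Yw_W: "Q \<in> pivs ds \<Longrightarrow> s \<le> nl \<Longrightarrow> Yw Q s \<in> raag_words (tree_V ds rr)"
  by (auto simp: Yw_def words_iff nl_def intro!: enc_lt HS_piv)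

lemma Xw_W: "Q \<in> pivs ds \<Longrightarrow> Xw Q s \<in> raag_words (tree_V ds rr)"
  using Yw_W[of Q nl] by (auto simp: Xw_def words_iff pivs_def nl_def intro!: enc_lt HS_piv)

lemma ot_W: "s < n \<Longrightarrow> x \<in> tree_V ds q \<Longrightarrow> ot s (x, b) \<in> raag_words (tree_V ds rr)"
proof (cases x)
  case Ctr then show ?thesis by simp
next
  case (Hair h) then show "s < n \<Longrightarrow> x \<in> tree_V ds q \<Longrightarrow> ?thesis" by (auto intro!: enc_lt HS_hair)
next
  case (Piv i j) then show "s < n \<Longrightarrow> x \<in> tree_V ds q \<Longrightarrow> ?thesis"
    by (cases b) (auto intro!: Xw_W simp: pivs_def)
next
  case (Leaf i j m) then show "s < n \<Longrightarrow> x \<in> tree_V ds q \<Longrightarrow> ?thesis"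
    using Yw_W[of "Piv i j" s] by (auto simp: pivs_def nl_def)
qed

lemma Yw_Nil[simp]: "Yw Q 0 = []" by (simp add: Yw_def)

lemma Yw_Suc: "s < nl \<Longrightarrow> Yw Q (Suc s) = Yw Q s @ Xw Q s"
  by (simp add: Yw_def Xw_def)

lemma Xw_last: "Xw Q nl = invw (Yw Q nl) @ [(Q, True)]"
  by (simp add: Xw_def)

lemma ot_inv: "s < n \<Longrightarrow> ot (nx s (x, b)) (x, \<not> b) = invw (ot s (x, b))"
proof (cases x)
  case (Piv i j)
  assume s: "s < n"
  then show ?thesis using Piv by (cases b) simp_all
qed simp_all

lemma E_cases:
  assumes "tree_E ds q' x y"
  shows "(x = Ctr \<and> (\<exists>h. y = Hair h \<and> h < q')) \<or> (y = Ctr \<and> (\<exists>h. x = Hair h \<and> h < q'))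
       \<or> (x = Ctr \<and> (\<exists>i j. y = Piv i j \<and> Piv i j \<in> tree_V ds q'))
       \<or> (y = Ctr \<and> (\<exists>i j. x = Piv i j \<and> Piv i j \<in> tree_V ds q'))
       \<or> (\<exists>i j m. x = Piv i j \<and> y = Leaf i j m \<and> Leaf i j m \<in> tree_V ds q')
       \<or> (\<exists>i j m. y = Piv i j \<and> x = Leaf i j m \<and> Leaf i j m \<in> tree_V ds q')"
  using assms unfolding tree_E_def tree_E0_def by auto

lemma ER_C_Hair[simp]: "tree_E ds q' Ctr (Hair h) \<longleftrightarrow> h < q'"
  by (simp add: tree_E_def)
lemma ER_C_Piv[simp]: "tree_E ds q' Ctr (Piv i j) \<longleftrightarrow> Piv i j \<in> tree_V ds q'"
  by (simp add: tree_E_def)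
lemma ER_Piv_Leaf[simp]: "tree_E ds q' (Piv i j) (Leaf i j m) \<longleftrightarrow> Leaf i j m \<in> tree_V ds q'"
  by (simp add: tree_E_def)
lemma ER_Leaf_Piv[simp]: "tree_E ds q' (Leaf i j m) (Piv i j) \<longleftrightarrow> Leaf i j m \<in> tree_V ds q'"
  by (simp add: tree_E_def)

lemma Yw_adjC: "Q \<in> pivs ds \<Longrightarrow> s \<le> nl \<Longrightarrow> \<forall>z \<in> fst ` set (Yw Q s). tree_E ds rr Ctr z"
  by (auto simp: Yw_def nl_def intro!: enc_lt HS_piv)

lemma Xw_adjC: "Q \<in> pivs ds \<Longrightarrow> \<forall>z \<in> fst ` set (Xw Q s). tree_E ds rr Ctr z"
  using Yw_adjC[of Q nl] by (auto simp: Xw_def pivs_def P0_def Yw_def set_invw nl_def intro!: enc_lt HS_piv)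

lemma ot_adjC: "s < n \<Longrightarrow> y \<in> tree_V ds q \<Longrightarrow> y \<noteq> Ctr \<Longrightarrow> (\<forall>i j m. y \<noteq> Leaf i j m) \<Longrightarrow>
   \<forall>z \<in> fst ` set (ot s (y, c)). tree_E ds rr Ctr z"
proof (cases y)
  case (Hair h) then show "s < n \<Longrightarrow> y \<in> tree_V ds q \<Longrightarrow> ?thesis" by (auto intro!: enc_lt HS_hair)
next
  case (Piv i j)
  then show "s < n \<Longrightarrow> y \<in> tree_V ds q \<Longrightarrow> ?thesis"
    using Xw_adjC[of "Piv i j"] by (cases c) (auto simp: pivs_def)
qed auto

sublocale R: rg "tree_V ds rr" "tree_E ds rr" .
sublocale Tq: rg "tree_V ds q" "tree_E ds q" .

lemma L_pos:
  assumes l: "Leaf i j m \<in> tree_V ds q" and s: "s < n"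
  shows "cls (tree_V ds rr) (tree_E ds rr) (Xw (Piv i j) s @ ot (sc s) (Leaf i j m, c))
       = cls (tree_V ds rr) (tree_E ds rr) (ot s (Leaf i j m, c) @ Xw (Piv i j) s)"
proof -
  let ?Q = "Piv i j"
  have Q: "?Q \<in> pivs ds" using l by (simp add: pivs_def)
  have lR: "Leaf i j m \<in> tree_V ds rr" "?Q \<in> tree_V ds rr" using l by auto
  have XW: "Xw ?Q s \<in> raag_words (tree_V ds rr)" using Xw_W[OF Q] .
  show ?thesis
  proof (cases "s < nl")
    case True
    then have e: "sc s = Suc s" using s by (simp add: sc_eq)
    have YW: "Yw ?Q s \<in> raag_words (tree_V ds rr)" using Yw_W[OF Q] True by simp
    show ?thesis using True YW XW lR
      by (simp add: e Yw_Suc R.cls_app R.cls_invw R.grp.inv_mult_group R.grp.m_assoc)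
  next
    case False
    then have sn: "s = nl" using s by (simp add: nl_def)
    have e: "sc nl = 0" by (simp add: sc_eq)
    have YW: "Yw ?Q nl \<in> raag_words (tree_V ds rr)" using Yw_W[OF Q] by simp
    have comm: "cls (tree_V ds rr) (tree_E ds rr) [(?Q, True)] \<otimes>\<^bsub>raag (tree_V ds rr) (tree_E ds rr)\<^esub> cls (tree_V ds rr) (tree_E ds rr) [(Leaf i j m, c)]
      = cls (tree_V ds rr) (tree_E ds rr) [(Leaf i j m, c)] \<otimes>\<^bsub>raag (tree_V ds rr) (tree_E ds rr)\<^esub> cls (tree_V ds rr) (tree_E ds rr) [(?Q, True)]"
      by (rule R.cls_comm) (use lR in auto)
    show ?thesis using YW lR
      by (simp add: e sn Xw_last R.cls_app R.cls_Cons R.cls_invw R.grp.inv_mult_group R.grp.m_assoc comm)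
  qed
qed

lemma nx_nonpiv: "(\<forall>i j. x \<noteq> Piv i j) \<Longrightarrow> nx s (x, b) = s"
  by (cases x) auto

lemma PL_rel:
  assumes l: "Leaf i j m \<in> tree_V ds q" and s: "s < n"
  shows "(ot s (Piv i j, b) @ ot (nx s (Piv i j, b)) (Leaf i j m, c),
          ot s (Leaf i j m, c) @ ot (nx s (Leaf i j m, c)) (Piv i j, b)) \<in> raag_rel (tree_V ds rr) (tree_E ds rr)"
proof (cases b)
  case True
  then show ?thesis using L_pos[OF l s, of c] by (simp add: R.rel_iff)
next
  case False
  let ?s = "pr s"
  have s': "?s < n" by simp
  have Q: "Piv i j \<in> pivs ds" using l by (simp add: pivs_def)
  have lW: "ot s (Leaf i j m, c) \<in> raag_words (tree_V ds rr)" using ot_W[OF s l] .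
  have lW': "ot ?s (Leaf i j m, c) \<in> raag_words (tree_V ds rr)" using ot_W[OF s' l] .
  have XW: "Xw (Piv i j) ?s \<in> raag_words (tree_V ds rr)" using Xw_W[OF Q] .
  have h0: "cls (tree_V ds rr) (tree_E ds rr) (Xw (Piv i j) ?s @ ot s (Leaf i j m, c))
      = cls (tree_V ds rr) (tree_E ds rr) (ot ?s (Leaf i j m, c) @ Xw (Piv i j) ?s)"
    using L_pos[OF l s', of c] sc_pr[OF s] by (simp only:)
  have h: "cls (tree_V ds rr) (tree_E ds rr) (Xw (Piv i j) ?s) \<otimes>\<^bsub>raag (tree_V ds rr) (tree_E ds rr)\<^esub> cls (tree_V ds rr) (tree_E ds rr) (ot s (Leaf i j m, c))
    = cls (tree_V ds rr) (tree_E ds rr) (ot ?s (Leaf i j m, c)) \<otimes>\<^bsub>raag (tree_V ds rr) (tree_E ds rr)\<^esub> cls (tree_V ds rr) (tree_E ds rr) (Xw (Piv i j) ?s)"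
    using h0 by (simp only: R.cls_app[OF XW lW] R.cls_app[OF lW' XW])
  have "cls (tree_V ds rr) (tree_E ds rr) (invw (Xw (Piv i j) ?s) @ ot ?s (Leaf i j m, c))
      = cls (tree_V ds rr) (tree_E ds rr) (ot s (Leaf i j m, c) @ invw (Xw (Piv i j) ?s))"
    using R.conj_flip[OF R.cls_carr[OF XW] R.cls_carr[OF lW] R.cls_carr[OF lW'] h]
    by (simp only: R.cls_app[OF words_invw[THEN iffD2, OF XW] lW'] R.cls_app[OF lW words_invw[THEN iffD2, OF XW]] R.cls_invw[OF XW])
  then show ?thesis using False by (simp add: R.rel_iff)
qed

lemma rho_xfer: "xfer (tree_V ds q) (tree_E ds q) (tree_V ds rr) (tree_E ds rr) {..<n} ot nx"
proof (unfold_locales)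
  fix s x b assume "s \<in> {..<n}" "x \<in> tree_V ds q"
  then show "nx s (x, b) \<in> {..<n}" using nx_lt by simp
next
  fix s x b assume "s \<in> {..<n}" "x \<in> tree_V ds q"
  then show "ot s (x, b) \<in> raag_words (tree_V ds rr)" using ot_W by simp
next
  fix s x b assume "s \<in> {..<n}" "x \<in> tree_V ds q"
  then show "nx (nx s (x, b)) (x, \<not> b) = s" using nx_inv by simp
next
  fix s x b assume s: "s \<in> {..<n}" and x: "x \<in> tree_V ds q"
  then show "(ot s (x, b) @ ot (nx s (x, b)) (x, \<not> b), []) \<in> raag_rel (tree_V ds rr) (tree_E ds rr)"
    using ot_inv[of s x b] rel_cancel[OF ot_W[of s x b]] by simp
next
  fix s x y b c assume s: "s \<in> {..<n}" and E: "tree_E ds q x y" and x: "x \<in> tree_V ds q" and y: "y \<in> tree_V ds q"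
  show "nx (nx s (x, b)) (y, c) = nx (nx s (y, c)) (x, b)"
    using E_cases[OF E] by (elim disjE exE conjE) auto
next
  fix s x y b c assume s: "s \<in> {..<n}" and E: "tree_E ds q x y" and x: "x \<in> tree_V ds q" and y: "y \<in> tree_V ds q"
  have sn: "s < n" using s by simp
  have CC: "([(Ctr, b')] @ ot s (z, c'), ot s (z, c') @ [(Ctr, b')]) \<in> raag_rel (tree_V ds rr) (tree_E ds rr)"
    if "z \<in> tree_V ds q" "z \<noteq> Ctr" "\<forall>i j m. z \<noteq> Leaf i j m" for z b' c'
    by (rule rel_commute) (use ot_W[OF sn that(1)] ot_adjC[OF sn that] in auto)
  show "(ot s (x, b) @ ot (nx s (x, b)) (y, c), ot s (y, c) @ ot (nx s (y, c)) (x, b)) \<in> raag_rel (tree_V ds rr) (tree_E ds rr)"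
    using E_cases[OF E]
  proof (elim disjE exE conjE)
    fix h assume "x = Ctr" "y = Hair h" "h < q"
    then show ?thesis using CC[of y b c] y by simp
  next
    fix h assume "y = Ctr" "x = Hair h" "h < q"
    then show ?thesis using CC[of x c b] x rel_sym by fastforce
  next
    fix i j assume "x = Ctr" "y = Piv i j" "Piv i j \<in> tree_V ds q"
    then show ?thesis using CC[of y b c] y nx_lt[OF sn] by (cases c) simp_all
  next
    fix i j assume "y = Ctr" "x = Piv i j" "Piv i j \<in> tree_V ds q"
    then show ?thesis using CC[of x c b] x rel_sym by (cases b) fastforce+
  next
    fix i j m assume "x = Piv i j" "y = Leaf i j m" "Leaf i j m \<in> tree_V ds q"
    then show ?thesis using PL_rel[of i j m s b c] sn by simp
  next
    fix i j m assume "y = Piv i j" "x = Leaf i j m" "Leaf i j m \<in> tree_V ds q"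
    then show ?thesis using PL_rel[of i j m s c b] sn rel_sym by fastforce
  qed
qed

abbreviation "GT \<equiv> raag (tree_V ds q) (tree_E ds q)"
abbreviation "GR \<equiv> raag (tree_V ds rr) (tree_E ds rr)"
abbreviation "clT \<equiv> cls (tree_V ds q) (tree_E ds q)"
abbreviation "clR \<equiv> cls (tree_V ds rr) (tree_E ds rr)"
abbreviation "WT \<equiv> raag_words (tree_V ds q)"
abbreviation "WR \<equiv> raag_words (tree_V ds rr)"

definition f0 :: "tvert \<Rightarrow> (tvert \<times> bool) list" where
  "f0 x = (case x of Ctr \<Rightarrow> [(Ctr, True)] | Piv i j \<Rightarrow> replicate n (Piv i j, True)
     | Leaf i j m \<Rightarrow> [(Leaf i j m, True)]
     | Hair k \<Rightarrow> (case dec k of (Q, s) \<Rightarrow> (case Q of Hair h \<Rightarrow> pw s True @ [(Hair h, True)] @ pw s False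
                                       | _ \<Rightarrow> pw s True @ [(Q, True)] @ pw (Suc s) False)))"

definition fo :: "unit \<Rightarrow> tvert \<times> bool \<Rightarrow> (tvert \<times> bool) list" where
  "fo u a = (if snd a then f0 (fst a) else invw (f0 (fst a)))"

definition nxu :: "unit \<Rightarrow> tvert \<times> bool \<Rightarrow> unit" where "nxu u a = ()"

lemma f0_simps[simp]: "f0 Ctr = [(Ctr, True)]" "f0 (Piv i j) = replicate n (Piv i j, True)"
  "f0 (Leaf i j m) = [(Leaf i j m, True)]"
  by (simp_all add: f0_def)

lemma pw_W[simp]: "pw k b \<in> raag_words (tree_V ds q')" by (simp add: pw_def)

lemma dec_cases:
  assumes "k < rr"
  obtains h s where "dec k = (Hair h, s)" "h < q" "s < n"
  | i j s where "dec k = (Piv i j, s)" "Piv i j \<in> tree_V ds q" "Piv i j \<noteq> P0" "s < nl"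
  using dec_HS[OF assms] by (auto simp: HS_def pivs_def nl_def)

lemma f0_W: "x \<in> tree_V ds rr \<Longrightarrow> f0 x \<in> WT"
proof (cases x)
  case (Hair k)
  assume "x \<in> tree_V ds rr"
  then have k: "k < rr" using Hair by simp
  show ?thesis using dec_cases[OF k] by cases (auto simp: f0_def Hair)
qed (auto simp: f0_def)

lemma f0_adjC: "x \<in> tree_V ds rr \<Longrightarrow> x \<noteq> Ctr \<Longrightarrow> (\<forall>i j m. x \<noteq> Leaf i j m) \<Longrightarrow>
   \<forall>z \<in> fst ` set (f0 x). tree_E ds q Ctr z"
proof (cases x)
  case (Hair k)
  assume "x \<in> tree_V ds rr"
  then have k: "k < rr" using Hair by simp
  have p0: "tree_E ds q Ctr P0" using P0_V[of q] by (simp add: P0_def)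
  show ?thesis using dec_cases[OF k] p0 by cases (auto simp: f0_def Hair pw_def)
qed (auto simp: f0_def)

lemma fo_inv: "fo u (x, \<not> b) = invw (fo u (x, b))"
  by (simp add: fo_def)

lemma phi_xfer: "xfer (tree_V ds rr) (tree_E ds rr) (tree_V ds q) (tree_E ds q) UNIV fo nxu"
proof (unfold_locales)
  fix s x b assume "x \<in> tree_V ds rr"
  then show "fo s (x, b) \<in> WT" using f0_W by (simp add: fo_def)
next
  fix s x b assume "x \<in> tree_V ds rr"
  then show "(fo s (x, b) @ fo (nxu s (x, b)) (x, \<not> b), []) \<in> raag_rel (tree_V ds q) (tree_E ds q)"
    using f0_W[of x] rel_cancel[of "f0 x"] rel_cancel'[of "f0 x"] by (cases b) (simp_all add: fo_def)
next
  fix s x y b c assume E: "tree_E ds rr x y" and x: "x \<in> tree_V ds rr" and y: "y \<in> tree_V ds rr"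
  have CC: "(fo u (Ctr, b') @ fo u (z, c'), fo u (z, c') @ fo u (Ctr, b')) \<in> raag_rel (tree_V ds q) (tree_E ds q)"
    if "z \<in> tree_V ds rr" "z \<noteq> Ctr" "\<forall>i j m. z \<noteq> Leaf i j m" for z b' c' u
  proof -
    have 1: "fst ` set (fo u (z, c')) = fst ` set (f0 z)" by (simp add: fo_def)
    have 2: "fst ` set (fo u (Ctr, b')) = {Ctr}" by (simp add: fo_def)
    have 3: "fo u (z, c') \<in> WT" using f0_W[OF that(1)] by (simp add: fo_def)
    have 4: "fo u (Ctr, b') \<in> WT" by (simp add: fo_def)
    show ?thesis by (rule rel_commute[OF 4 3]) (use f0_adjC[OF that] in \<open>simp only: 1 2, blast\<close>)
  qed
  have PL: "(fo u (Piv i j, b') @ fo u (Leaf i j m, c'), fo u (Leaf i j m, c') @ fo u (Piv i j, b')) \<in> raag_rel (tree_V ds q) (tree_E ds q)"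
    if "Leaf i j m \<in> tree_V ds rr" for i j m b' c' u
    by (rule rel_commute) (use that in \<open>auto simp: fo_def f0_def\<close>)
  show "(fo s (x, b) @ fo (nxu s (x, b)) (y, c), fo s (y, c) @ fo (nxu s (y, c)) (x, b)) \<in> raag_rel (tree_V ds q) (tree_E ds q)"
    using E_cases[OF E]
  proof (elim disjE exE conjE)
    fix h assume "x = Ctr" "y = Hair h" "h < rr"
    then show ?thesis using CC[where z=y and b'=b and c'=c and u=s] y by (simp add: nxu_def)
  next
    fix h assume "y = Ctr" "x = Hair h" "h < rr"
    then show ?thesis using CC[where z=x and b'=c and c'=b and u=s] x rel_sym by (fastforce simp: nxu_def)
  next
    fix i j assume "x = Ctr" "y = Piv i j" "Piv i j \<in> tree_V ds rr"
    then show ?thesis using CC[where z=y and b'=b and c'=c and u=s] y by (simp add: nxu_def)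
  next
    fix i j assume "y = Ctr" "x = Piv i j" "Piv i j \<in> tree_V ds rr"
    then show ?thesis using CC[where z=x and b'=c and c'=b and u=s] x rel_sym by (fastforce simp: nxu_def)
  next
    fix i j m assume "x = Piv i j" "y = Leaf i j m" "Leaf i j m \<in> tree_V ds rr"
    then show ?thesis using PL[where i=i and j=j and m=m and b'=b and c'=c and u=s] by (simp add: nxu_def)
  next
    fix i j m assume "y = Piv i j" "x = Leaf i j m" "Leaf i j m \<in> tree_V ds rr"
    then show ?thesis using PL[where i=i and j=j and m=m and b'=c and c'=b and u=s] rel_sym by (fastforce simp: nxu_def)
  qed
qed (simp_all add: nxu_def)

end


context cfg begin

lemma ot_P0: "ot s (P0, True) = Xw P0 s" "ot s (P0, False) = invw (Xw P0 (pr s))"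
  "nx s (P0, True) = sc s" "nx s (P0, False) = pr s"
  by (simp_all add: P0_def)

lemma Xw_P0: "s < nl \<Longrightarrow> Xw P0 s = []" by (simp add: Xw_def)

lemma pw_Suc: "pw (Suc k) b = (P0, b) # pw k b" by (simp add: pw_def)
lemma pw_0[simp]: "pw 0 b = []" by (simp add: pw_def)

lemma pwT: "t + k \<le> nl \<Longrightarrow> Rs ot nx t (pw k True) = [] \<and> foldl nx t (pw k True) = t + k"
proof (induct k arbitrary: t)
  case 0 then show ?case by simp
next
  case (Suc k)
  have t: "t < nl" "t < n" using Suc.prems nl_lt by linarith+
  then have "sc t = Suc t" by (simp add: sc_eq)
  then show ?case using Suc.hyps[of "Suc t"] Suc.prems t by (simp add: pw_Suc ot_P0 Xw_P0)
qed

lemma pwF: "k \<le> t \<Longrightarrow> t < n \<Longrightarrow> Rs ot nx t (pw k False) = [] \<and> foldl nx t (pw k False) = t - k"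
proof (induct k arbitrary: t)
  case 0 then show ?case by simp
next
  case (Suc k)
  have t: "t \<noteq> 0" "t - 1 < nl" using Suc.prems by (auto simp: nl_def)
  then have e: "pr t = t - 1" using Suc.prems by (simp add: pr_eq)
  show ?case using Suc.hyps[of "t - 1"] Suc.prems t by (simp add: pw_Suc ot_P0 Xw_P0 e)
qed

lemma repQ: "k \<le> nl \<Longrightarrow> Rs ot nx 0 (replicate k (Piv i j, True)) = Yw (Piv i j) k
    \<and> foldl nx 0 (replicate k (Piv i j, True)) = k"
proof (induct k)
  case 0 then show ?case by simp
next
  case (Suc k)
  have k: "k < nl" "k < n" using Suc.prems nl_lt by linarith+
  then have "sc k = Suc k" by (simp add: sc_eq)
  have r: "replicate (Suc k) (Piv i j, True) = replicate k (Piv i j, True) @ [(Piv i j, True)]"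
    by (simp add: replicate_append_same)
  show ?case using Suc k \<open>sc k = Suc k\<close> by (simp only: r Rs_append foldl_append) (simp add: Yw_Suc)
qed

lemma n_eq: "n = Suc nl" using npos by (simp add: nl_def)

lemma rp_gen: "x \<in> tree_V ds rr \<Longrightarrow> clR (Rs ot nx 0 (f0 x)) = clR [(x, True)] \<and> foldl nx 0 (f0 x) = 0"
proof (cases x)
  case (Piv i j)
  assume xV: "x \<in> tree_V ds rr"
  have Q: "Piv i j \<in> pivs ds" using xV Piv by (simp add: pivs_def)
  have YW: "Yw (Piv i j) nl \<in> WR" using Yw_W[OF Q] by simp
  have rep: "f0 x = replicate nl (Piv i j, True) @ [(Piv i j, True)]"
  proof -
    have "f0 x = replicate n (Piv i j, True)" using Piv by simp
    also have "\<dots> = replicate nl (Piv i j, True) @ [(Piv i j, True)]"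
      by (metis n_eq replicate_Suc replicate_append_same)
    finally show ?thesis .
  qed
  have r1: "Rs ot nx 0 (f0 x) = Yw (Piv i j) nl @ invw (Yw (Piv i j) nl) @ [(Piv i j, True)]"
    using repQ[of nl i j] by (simp only: rep Rs_append) (simp add: Xw_last)
  have "(Yw (Piv i j) nl @ invw (Yw (Piv i j) nl) @ [(Piv i j, True)], [(Piv i j, True)]) \<in> raag_rel (tree_V ds rr) (tree_E ds rr)"
    using rel_ctx[OF rel_cancel[OF YW], of "[]" "[(Piv i j, True)]"] xV Piv by simp
  moreover have "foldl nx 0 (f0 x) = 0"
    using repQ[of nl i j] by (simp only: rep foldl_append) (simp add: sc_eq)
  ultimately show ?thesis using r1 Piv by (simp add: cls_eq)
next
  case (Hair k)
  assume xV: "x \<in> tree_V ds rr"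
  then have k: "k < rr" using Hair by simp
  show ?thesis using dec_cases[OF k]
  proof cases
    case (1 h s)
    have e: "enc (Hair h, s) = k" using enc_dec[OF k] 1 by simp
    have f: "f0 (Hair k) = pw s True @ [(Hair h, True)] @ pw s False" using 1 by (simp add: f0_def)
    have s: "s \<le> nl" using 1 by (simp add: nl_def)
    show ?thesis unfolding Hair f using pwT[of 0 s] pwF[of s s] s 1 by (simp add: e)
  next
    case (2 i j s)
    have e: "enc (Piv i j, s) = k" using enc_dec[OF k] 2 by simp
    have f: "f0 (Hair k) = pw s True @ [(Piv i j, True)] @ pw (Suc s) False" using 2 by (simp add: f0_def)
    have s: "s \<le> nl" "Suc s < n" "sc s = Suc s" using 2 by (auto simp: nl_def sc_eq)
    have X: "Xw (Piv i j) s = [(Hair k, True)]" using 2 e by (simp add: Xw_def)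
    show ?thesis unfolding Hair f using pwT[of 0 s] pwF[of "Suc s" "Suc s"] s 2 by (simp add: X)
  qed
qed simp_all

lemma rho_S: "s \<in> {..<n} \<Longrightarrow> x \<in> tree_V ds q \<Longrightarrow> nx s (x, b) \<in> {..<n}"
  using nx_lt by simp

lemma Rs_rho_invw: "w \<in> WT \<Longrightarrow>
     Rs ot nx (foldl nx 0 w) (invw w) = invw (Rs ot nx 0 w) \<and> foldl nx (foldl nx 0 w) (invw w) = 0"
  using Rs_invw[of "{..<n}" "tree_V ds q" ot nx 0 w] ot_inv nx_inv rho_S npos by auto

lemma rp_letter: "x \<in> tree_V ds rr \<Longrightarrow> clR (Rs ot nx 0 (fo u (x, b))) = clR [(x, b)] \<and> foldl nx 0 (fo u (x, b)) = 0"
proof (cases b)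
  case True
  assume "x \<in> tree_V ds rr" then show ?thesis using rp_gen True by (simp add: fo_def)
next
  case False
  assume xV: "x \<in> tree_V ds rr"
  have fW: "f0 x \<in> WT" using f0_W[OF xV] .
  have g: "clR (Rs ot nx 0 (f0 x)) = clR [(x, True)]" "foldl nx 0 (f0 x) = 0" using rp_gen[OF xV] by auto
  have RW: "Rs ot nx 0 (f0 x) \<in> WR" using xfer.Rs_W[OF rho_xfer, of 0 "f0 x"] fW npos by simp
  have i: "Rs ot nx 0 (invw (f0 x)) = invw (Rs ot nx 0 (f0 x))" "foldl nx 0 (invw (f0 x)) = 0"
    using Rs_rho_invw[OF fW] g(2) by auto
  show ?thesis using False i g xV RW by (simp add: fo_def R.cls_invw R.cls_neg)
qed

definition Phi :: "(tvert \<times> bool) list \<Rightarrow> (tvert \<times> bool) list" where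
  "Phi w = concat (map (fo ()) w)"

lemma Rs_Phi: "Rs fo nxu u w = Phi w"
  by (induct w arbitrary: u) (simp_all add: Phi_def)

lemma Phi_simps[simp]: "Phi [] = []" "Phi (a # w) = fo () a @ Phi w" "Phi (v @ w) = Phi v @ Phi w"
  by (simp_all add: Phi_def)

lemma Phi_W: "w \<in> WR \<Longrightarrow> Phi w \<in> WT"
  using xfer.Rs_W[OF phi_xfer, of "()" w] by (simp add: Rs_Phi)

lemma rp_word: "w \<in> WR \<Longrightarrow> clR (Rs ot nx 0 (Phi w)) = clR w \<and> foldl nx 0 (Phi w) = 0"
proof (induct w)
  case Nil then show ?case by (simp add: R.cls_Nil)
next
  case (Cons a w)
  obtain x b where a: "a = (x, b)" by (cases a)
  with Cons have xV: "x \<in> tree_V ds rr" and wW: "w \<in> WR" by auto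
  have l: "clR (Rs ot nx 0 (fo () (x, b))) = clR [(x, b)]" "foldl nx 0 (fo () (x, b)) = 0"
    using rp_letter[OF xV] by auto
  have ih: "clR (Rs ot nx 0 (Phi w)) = clR w" "foldl nx 0 (Phi w) = 0"
    using Cons(1)[OF wW] by auto
  have foW: "fo () (x, b) \<in> WT" using xfer.out_W[OF phi_xfer] xV by simp
  have W1: "Rs ot nx 0 (fo () (x, b)) \<in> WR" using xfer.Rs_W[OF rho_xfer] foW npos by simp
  have W2: "Rs ot nx 0 (Phi w) \<in> WR" using xfer.Rs_W[OF rho_xfer] Phi_W[OF wW] npos by simp
  have "clR ((x, b) # w) = clR [(x, b)] \<otimes>\<^bsub>GR\<^esub> clR w" using R.cls_app[of "[(x, b)]" w] xV wW by simp
  then show ?case using a l ih W1 W2 by (simp add: R.cls_app)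
qed

end


context cfg begin

abbreviation "pp \<equiv> clT [(P0, True)]"

lemma pp_carr[simp]: "pp \<in> carrier GT" by simp

lemma cls_pwT: "clT (pw k True) = pp [^]\<^bsub>GT\<^esub> k"
  unfolding pw_def by (rule Tq.cls_rep) simp

lemma cls_pwF: "clT (pw k False) = inv\<^bsub>GT\<^esub> (pp [^]\<^bsub>GT\<^esub> k)"
  unfolding pw_def by (rule Tq.cls_repF) simp

lemma Tcons_pw: "x \<in> tree_V ds q \<Longrightarrow> clT ((x, c) # pw k b) = clT [(x, c)] \<otimes>\<^bsub>GT\<^esub> clT (pw k b)"
  using Tq.cls_app[of "[(x, c)]" "pw k b"] by simp

lemma Phi_invw: "Phi (invw w) = invw (Phi w)"
proof (induct w)
  case (Cons a w)
  obtain x b where a: "a = (x, b)" by (cases a)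
  then show ?case using Cons fo_inv[of "()" x b] by simp
qed simp

lemma XwPhi: "Q \<in> pivs ds \<Longrightarrow> s < nl \<Longrightarrow>
  clT (Phi (Xw Q s)) = pp [^]\<^bsub>GT\<^esub> s \<otimes>\<^bsub>GT\<^esub> clT [(Q, True)] \<otimes>\<^bsub>GT\<^esub> inv\<^bsub>GT\<^esub> (pp [^]\<^bsub>GT\<^esub> Suc s)"
proof (cases "Q = P0")
  case True
  assume "s < nl"
  then show ?thesis using True by (simp add: Xw_def Tq.cls_Nil Tq.grp.m_assoc Tq.grp.inv_mult_group)
next
  case False
  assume Q: "Q \<in> pivs ds" and s: "s < nl"
  obtain i j where ij: "Q = Piv i j" "Piv i j \<in> tree_V ds q" using Q by (auto simp: pivs_def)
  have hs: "(Q, s) \<in> HS ds q n" using HS_piv[OF Q False] s by (simp add: nl_def)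
  have X: "Xw Q s = [(Hair (enc (Q, s)), True)]" using False s by (simp add: Xw_def)
  have f: "f0 (Hair (enc (Q, s))) = pw s True @ [(Q, True)] @ pw (Suc s) False"
    using dec_enc[OF hs] ij by (simp add: f0_def)
  have QV: "Q \<in> tree_V ds q" using ij by simp
  show ?thesis using QV
    by (simp add: X fo_def f Tq.cls_app Tcons_pw Tq.cls_Nil cls_pwT cls_pwF Tq.grp.m_assoc del: Tq.grp.nat_pow_Suc)
qed

lemma YwPhi: "Q \<in> pivs ds \<Longrightarrow> s \<le> nl \<Longrightarrow>
  clT (Phi (Yw Q s)) = clT [(Q, True)] [^]\<^bsub>GT\<^esub> s \<otimes>\<^bsub>GT\<^esub> inv\<^bsub>GT\<^esub> (pp [^]\<^bsub>GT\<^esub> s)"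
proof (induct s)
  case 0 then show ?case by (simp add: Tq.cls_Nil)
next
  case (Suc s)
  then have s: "s < nl" by simp
  have QV: "Q \<in> tree_V ds q" using Suc.prems by (auto simp: pivs_def)
  have YW: "Phi (Yw Q s) \<in> WT" using Phi_W Yw_W Suc.prems s by simp
  have XW: "Phi (Xw Q s) \<in> WT" using Phi_W Xw_W Suc.prems by simp
  show ?case using Suc.hyps Suc.prems s QV YW XW XwPhi[of Q s]
    by (simp add: Yw_Suc Tq.cls_app Tq.grp.m_assoc Tq.grp.inv_mult_group)
qed

lemma E_P0_Ctr[simp]: "tree_E ds q' P0 Ctr" "tree_E ds q' Ctr P0"
  using P0_V[of q'] by (auto simp: P0_def tree_E_def)

lemma PR1:
  assumes s: "s < n" and x: "x \<in> tree_V ds q"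
  shows "clT (Phi (ot s (x, True))) = pp [^]\<^bsub>GT\<^esub> s \<otimes>\<^bsub>GT\<^esub> clT [(x, True)] \<otimes>\<^bsub>GT\<^esub> inv\<^bsub>GT\<^esub> (pp [^]\<^bsub>GT\<^esub> nx s (x, True))"
proof (cases x)
  case Ctr
  have comm: "clT (pw s True) \<otimes>\<^bsub>GT\<^esub> clT [(Ctr, True)] = clT [(Ctr, True)] \<otimes>\<^bsub>GT\<^esub> clT (pw s True)"
    by (rule Tq.cls_comm) (auto simp: pw_def)
  then show ?thesis using Ctr by (simp add: fo_def cls_pwT Tq.grp.m_assoc del: Tq.grp.nat_pow_Suc)
next
  case (Hair h)
  then have hs: "(Hair h, s) \<in> HS ds q n" using x s HS_hair by simp
  have f: "f0 (Hair (enc (Hair h, s))) = pw s True @ [(Hair h, True)] @ pw s False"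
    using dec_enc[OF hs] by (simp add: f0_def)
  show ?thesis using Hair x
    by (simp add: fo_def f Tq.cls_app Tcons_pw cls_pwT cls_pwF Tq.grp.m_assoc del: Tq.grp.nat_pow_Suc)
next
  case (Leaf i j m)
  let ?Q = "Piv i j"
  have Q: "?Q \<in> pivs ds" "?Q \<in> tree_V ds q" using x Leaf by (auto simp: pivs_def)
  have lV: "Leaf i j m \<in> tree_V ds q" using x Leaf by simp
  have sl: "s \<le> nl" using s by (simp add: nl_def)
  have YW: "Phi (Yw ?Q s) \<in> WT" using Phi_W Yw_W Q sl by simp
  have comm: "clT [(Leaf i j m, True)] \<otimes>\<^bsub>GT\<^esub> clT (replicate s (?Q, True)) = clT (replicate s (?Q, True)) \<otimes>\<^bsub>GT\<^esub> clT [(Leaf i j m, True)]"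
    by (rule Tq.cls_comm) (use lV in auto)
  then have comm': "clT [(Leaf i j m, True)] \<otimes>\<^bsub>GT\<^esub> (clT [(?Q, True)] [^]\<^bsub>GT\<^esub> s \<otimes>\<^bsub>GT\<^esub> z)
     = clT [(?Q, True)] [^]\<^bsub>GT\<^esub> s \<otimes>\<^bsub>GT\<^esub> (clT [(Leaf i j m, True)] \<otimes>\<^bsub>GT\<^esub> z)" if "z \<in> carrier GT" for z
    using that Q lV by (simp add: Tq.cls_rep Tq.grp.m_assoc[symmetric])
  let ?A = "clT (Phi (Yw ?Q s))"
  let ?l = "clT [(Leaf i j m, True)]"
  let ?q = "clT [(?Q, True)]"
  have cc: "clT ((Leaf i j m, True) # Phi (Yw ?Q s)) = ?l \<otimes>\<^bsub>GT\<^esub> ?A"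
    using Tq.cls_app[of "[(Leaf i j m, True)]" "Phi (Yw ?Q s)"] YW lV by simp
  have e0: "Phi (ot s (x, True)) = invw (Phi (Yw ?Q s)) @ (Leaf i j m, True) # Phi (Yw ?Q s)"
    using Leaf by (simp add: fo_def Phi_invw)
  have e1: "clT (Phi (ot s (x, True))) = inv\<^bsub>GT\<^esub> ?A \<otimes>\<^bsub>GT\<^esub> (?l \<otimes>\<^bsub>GT\<^esub> ?A)"
    unfolding e0 using YW lV
    by (simp only: Tq.cls_app[of "invw (Phi (Yw ?Q s))" "(Leaf i j m, True) # Phi (Yw ?Q s)"] cc Tq.cls_invw[OF YW]
        words_invw words_Cons simp_thms)
  have A: "?A = ?q [^]\<^bsub>GT\<^esub> s \<otimes>\<^bsub>GT\<^esub> inv\<^bsub>GT\<^esub> (pp [^]\<^bsub>GT\<^esub> s)" using YwPhi[OF Q(1) sl] .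
  have qc: "?q \<in> carrier GT" "?l \<in> carrier GT" using Q lV by simp_all
  have c2: "?l \<otimes>\<^bsub>GT\<^esub> ?q [^]\<^bsub>GT\<^esub> s = ?q [^]\<^bsub>GT\<^esub> s \<otimes>\<^bsub>GT\<^esub> ?l"
    using comm Q by (simp add: Tq.cls_rep)
  have e2: "inv\<^bsub>GT\<^esub> ?A \<otimes>\<^bsub>GT\<^esub> (?l \<otimes>\<^bsub>GT\<^esub> ?A) = pp [^]\<^bsub>GT\<^esub> s \<otimes>\<^bsub>GT\<^esub> ?l \<otimes>\<^bsub>GT\<^esub> inv\<^bsub>GT\<^esub> (pp [^]\<^bsub>GT\<^esub> s)"
  proof -
    have "inv\<^bsub>GT\<^esub> ?A \<otimes>\<^bsub>GT\<^esub> (?l \<otimes>\<^bsub>GT\<^esub> ?A)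
      = pp [^]\<^bsub>GT\<^esub> s \<otimes>\<^bsub>GT\<^esub> (inv\<^bsub>GT\<^esub> (?q [^]\<^bsub>GT\<^esub> s) \<otimes>\<^bsub>GT\<^esub> ((?l \<otimes>\<^bsub>GT\<^esub> ?q [^]\<^bsub>GT\<^esub> s) \<otimes>\<^bsub>GT\<^esub> inv\<^bsub>GT\<^esub> (pp [^]\<^bsub>GT\<^esub> s)))"
      using qc by (simp add: A Tq.grp.inv_mult_group Tq.grp.m_assoc del: Tq.grp.nat_pow_Suc)
    also have "\<dots> = pp [^]\<^bsub>GT\<^esub> s \<otimes>\<^bsub>GT\<^esub> (inv\<^bsub>GT\<^esub> (?q [^]\<^bsub>GT\<^esub> s) \<otimes>\<^bsub>GT\<^esub> ((?q [^]\<^bsub>GT\<^esub> s \<otimes>\<^bsub>GT\<^esub> ?l) \<otimes>\<^bsub>GT\<^esub> inv\<^bsub>GT\<^esub> (pp [^]\<^bsub>GT\<^esub> s)))"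
      by (simp only: c2)
    also have "\<dots> = pp [^]\<^bsub>GT\<^esub> s \<otimes>\<^bsub>GT\<^esub> ?l \<otimes>\<^bsub>GT\<^esub> inv\<^bsub>GT\<^esub> (pp [^]\<^bsub>GT\<^esub> s)"
      using qc by (simp add: Tq.grp.m_assoc del: Tq.grp.nat_pow_Suc)
    finally show ?thesis .
  qed
  show ?thesis using e1 e2 Leaf by simp
next
  case (Piv i j)
  let ?Q = "Piv i j"
  have Q: "?Q \<in> pivs ds" "?Q \<in> tree_V ds q" using x Piv by (auto simp: pivs_def)
  show ?thesis
  proof (cases "s < nl")
    case True
    then show ?thesis using XwPhi[OF Q(1) True] Piv by (simp add: sc_eq s)
  next
    case False
    then have sn: "s = nl" using s by (simp add: nl_def)
    have YW: "Phi (Yw ?Q nl) \<in> WT" using Phi_W Yw_W Q by simp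
    have rep: "clT (replicate n (?Q, True)) = clT [(?Q, True)] [^]\<^bsub>GT\<^esub> nl \<otimes>\<^bsub>GT\<^esub> clT [(?Q, True)]"
    proof -
      have "clT (replicate n (?Q, True)) = clT [(?Q, True)] [^]\<^bsub>GT\<^esub> n" by (rule Tq.cls_rep) (use Q in simp)
      also have "\<dots> = clT [(?Q, True)] [^]\<^bsub>GT\<^esub> Suc nl" using n_eq by (rule arg_cong)
      finally show ?thesis by simp
    qed
    have sc0: "sc nl = 0" by (simp add: sc_eq)
    show ?thesis using Piv sn YW YwPhi[OF Q(1) order.refl] Q
      by (simp add: Xw_last fo_def Phi_invw Tq.cls_app Tq.cls_invw rep sc0 Tq.grp.m_assoc Tq.grp.inv_mult_group del: Tq.grp.nat_pow_Suc)
  qed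
qed

lemma PRb:
  assumes s: "s < n" and x: "x \<in> tree_V ds q"
  shows "clT (Phi (ot s (x, b))) = pp [^]\<^bsub>GT\<^esub> s \<otimes>\<^bsub>GT\<^esub> clT [(x, b)] \<otimes>\<^bsub>GT\<^esub> inv\<^bsub>GT\<^esub> (pp [^]\<^bsub>GT\<^esub> nx s (x, b))"
proof (cases b)
  case True then show ?thesis using PR1[OF s x] by simp
next
  case False
  let ?s = "nx s (x, False)"
  have s': "?s < n" using nx_lt[OF s] .
  have e1: "ot s (x, False) = invw (ot ?s (x, True))" using ot_inv[OF s, of x False] by simp
  have e2: "nx ?s (x, True) = s" using nx_inv[OF s, of x False] by simp
  have W: "Phi (ot ?s (x, True)) \<in> WT" using Phi_W ot_W[OF s' x] by simp
  show ?thesis using False PR1[OF s' x] e2 W x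
    by (simp add: e1 Phi_invw Tq.cls_invw Tq.cls_neg Tq.grp.inv_mult_group Tq.grp.m_assoc del: Tq.grp.nat_pow_Suc)
qed

lemma PRw: "s < n \<Longrightarrow> w \<in> WT \<Longrightarrow>
  clT (Phi (Rs ot nx s w)) = pp [^]\<^bsub>GT\<^esub> s \<otimes>\<^bsub>GT\<^esub> clT w \<otimes>\<^bsub>GT\<^esub> inv\<^bsub>GT\<^esub> (pp [^]\<^bsub>GT\<^esub> foldl nx s w)"
proof (induct w arbitrary: s)
  case Nil then show ?case by (simp add: Tq.cls_Nil Tq.grp.m_assoc del: Tq.grp.nat_pow_Suc)
next
  case (Cons a w)
  obtain x b where a: "a = (x, b)" by (cases a)
  with Cons have xV: "x \<in> tree_V ds q" and wW: "w \<in> WT" by auto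
  have s1: "nx s (x, b) < n" using nx_lt Cons.prems by simp
  have ih: "clT (Phi (Rs ot nx (nx s (x, b)) w)) = pp [^]\<^bsub>GT\<^esub> nx s (x, b) \<otimes>\<^bsub>GT\<^esub> clT w \<otimes>\<^bsub>GT\<^esub> inv\<^bsub>GT\<^esub> (pp [^]\<^bsub>GT\<^esub> foldl nx (nx s (x, b)) w)"
    using Cons(1)[OF s1 wW] .
  have W1: "Phi (ot s (x, b)) \<in> WT" using Phi_W ot_W Cons.prems xV by simp
  have W2: "Phi (Rs ot nx (nx s (x, b)) w) \<in> WT" using Phi_W xfer.Rs_W[OF rho_xfer] s1 wW by simp
  have c: "clT ((x, b) # w) = clT [(x, b)] \<otimes>\<^bsub>GT\<^esub> clT w" using Tq.cls_app[of "[(x, b)]" w] xV wW by simp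
  show ?case using a ih PRb[OF Cons.prems(1) xV, of b] W1 W2 xV wW
    by (simp add: c Tq.cls_app Tq.grp.m_assoc del: Tq.grp.nat_pow_Suc)
qed

end


context cfg begin

abbreviation "ph \<equiv> hmapg (tree_V ds q) (tree_E ds q) fo nxu ()"

lemma ph_hom: "ph \<in> hom GR GT"
  using xfer.hmap_hom[OF phi_xfer, of "()"] by (simp add: nxu_def)

lemma ph_cls: "w \<in> WR \<Longrightarrow> ph (clR w) = clT (Phi w)"
  using xfer.hmap_cls[OF phi_xfer, of "()" w] by (simp add: Rs_Phi)

abbreviation "KK \<equiv> ph ` carrier GR"

lemma KK_sub: "subgroup KK GT"
proof -
  interpret gh: group_hom GR GT ph
    by (intro group_hom.intro group_hom_axioms.intro R.grp.is_group Tq.grp.is_group ph_hom)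
  show ?thesis by (rule gh.img_is_subgroup)
qed

lemma ph_inj: "inj_on ph (carrier GR)"
proof (rule inj_onI)
  fix x y assume x: "x \<in> carrier GR" and y: "y \<in> carrier GR" and e: "ph x = ph y"
  obtain u where u: "u \<in> WR" "x = clR u" using x by (auto simp: carrier_raag)
  obtain v where v: "v \<in> WR" "y = clR v" using y by (auto simp: carrier_raag)
  have "clT (Phi u) = clT (Phi v)" using e u v ph_cls by simp
  then have "(Phi u, Phi v) \<in> raag_rel (tree_V ds q) (tree_E ds q)" by (simp add: cls_eq_iff)
  then have "(Rs ot nx 0 (Phi u), Rs ot nx 0 (Phi v)) \<in> raag_rel (tree_V ds rr) (tree_E ds rr)"
    using xfer.rel_xfer[OF rho_xfer, of "Phi u" "Phi v" 0] Phi_W[OF u(1)] npos by simp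
  then have "clR (Rs ot nx 0 (Phi u)) = clR (Rs ot nx 0 (Phi v))" by (simp add: cls_eq_iff)
  then show "x = y" using rp_word u v by simp
qed

lemma ph_iso: "ph \<in> iso GR (GT\<lparr>carrier := KK\<rparr>)"
proof (rule isoI)
  show "ph \<in> hom GR (GT\<lparr>carrier := KK\<rparr>)"
    using ph_hom by (auto simp: hom_def)
  show "bij_betw ph (carrier GR) (carrier (GT\<lparr>carrier := KK\<rparr>))"
    using ph_inj by (simp add: bij_betw_def)
qed

lemma KK_cosets: "rcosets\<^bsub>GT\<^esub> KK \<subseteq> (\<lambda>s. KK #>\<^bsub>GT\<^esub> (pp [^]\<^bsub>GT\<^esub> s)) ` {..<n}"
proof
  fix C assume "C \<in> rcosets\<^bsub>GT\<^esub> KK"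
  then obtain g where g: "g \<in> carrier GT" "C = KK #>\<^bsub>GT\<^esub> g" by (auto simp: RCOSETS_def)
  obtain w where w: "w \<in> WT" "g = clT w" using g by (auto simp: carrier_raag)
  let ?s = "foldl nx 0 w"
  have s: "?s < n" using xfer.st_S[OF rho_xfer, of 0 w] w npos by simp
  let ?w = "w @ pw ?s False"
  have wW: "?w \<in> WT" using w by simp
  have st: "foldl nx 0 ?w = 0" using pwF[of ?s ?s] s by simp
  have RW: "Rs ot nx 0 ?w \<in> WR" using xfer.Rs_W[OF rho_xfer, of 0 ?w] wW npos by simp
  have "clT (Phi (Rs ot nx 0 ?w)) = clT ?w"
    using PRw[of 0 ?w] wW st npos by (simp add: Tq.grp.m_assoc)
  then have inK: "clT ?w \<in> KK" using ph_cls[OF RW] RW by (metis cls_in_carrier image_eqI)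
  have "clT ?w = g \<otimes>\<^bsub>GT\<^esub> inv\<^bsub>GT\<^esub> (pp [^]\<^bsub>GT\<^esub> ?s)"
    using w by (simp add: Tq.cls_app cls_pwF)
  then have "g = clT ?w \<otimes>\<^bsub>GT\<^esub> pp [^]\<^bsub>GT\<^esub> ?s"
    using w by (simp add: Tq.grp.m_assoc)
  then have "g \<in> KK #>\<^bsub>GT\<^esub> (pp [^]\<^bsub>GT\<^esub> ?s)"
    using inK Tq.grp.rcosI[of "clT ?w" KK "pp [^]\<^bsub>GT\<^esub> ?s"] subgroup.subset[OF KK_sub] by simp
  then have "KK #>\<^bsub>GT\<^esub> (pp [^]\<^bsub>GT\<^esub> ?s) = KK #>\<^bsub>GT\<^esub> g"
    using Tq.grp.repr_independence[OF _ _ KK_sub] by simp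
  then show "C \<in> (\<lambda>s. KK #>\<^bsub>GT\<^esub> (pp [^]\<^bsub>GT\<^esub> s)) ` {..<n}" using g s by auto
qed

lemma main_iso: "iso_to_finite_index_subgroup (tree_raag ds rr) (tree_raag ds q)"
  unfolding iso_to_finite_index_subgroup_def finite_index_subgroup_def tree_raag_def
proof (intro exI conjI)
  show "subgroup KK GT" by (rule KK_sub)
  show "finite (rcosets\<^bsub>GT\<^esub> KK)" using KK_cosets by (rule finite_subset) simp
  show "GR \<cong> GT\<lparr>carrier := KK\<rparr>" using ph_iso by (rule is_isoI)
qed

end


lemma pivs_eq: "pivs ds = (\<Union>i<length ds. Piv i ` {..<snd (ds ! i)})"
  unfolding pivs_def by blast

lemma pivs_finite: "finite (pivs ds)"
  by (simp add: pivs_eq)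

lemma valid_pos: "valid_params ds \<Longrightarrow> i < length ds \<Longrightarrow> 0 < snd (ds ! i)"
proof -
  assume v: "valid_params ds" and i: "i < length ds"
  have "\<forall>x\<in>set ds. 0 < snd x" using v by (auto simp: valid_params_def)
  then show ?thesis using nth_mem[OF i] by blast
qed

lemma P0_pivs: "valid_params ds \<Longrightarrow> P0 \<in> pivs ds"
proof -
  assume v: "valid_params ds"
  have ne: "ds \<noteq> []" and "\<forall>x\<in>set ds. 0 < snd x" using v by (auto simp: valid_params_def)
  then have "0 < snd (ds ! 0)" by simp
  then show ?thesis using ne by (simp add: pivs_def P0_def)
qed

lemma two_pivs: "valid_params ds \<Longrightarrow> 2 \<le> card (pivs ds)"
proof -
  assume v: "valid_params ds"
  have ne: "ds \<noteq> []" using v by (simp add: valid_params_def)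
  obtain a b where ab: "a \<in> pivs ds" "b \<in> pivs ds" "a \<noteq> b"
  proof (cases "2 \<le> length ds")
    case True
    have "Piv 0 0 \<in> pivs ds" "Piv 1 0 \<in> pivs ds"
    proof -
      have l: "0 < length ds" "1 < length ds" using True by auto
      have "0 < snd (ds ! 0)" "0 < snd (ds ! 1)" using valid_pos[OF v l(1)] valid_pos[OF v l(2)] by auto
      then show "Piv 0 0 \<in> pivs ds" "Piv 1 0 \<in> pivs ds" using l by (simp_all add: pivs_def)
    qed
    then show ?thesis by (rule that) simp
  next
    case False
    then have "2 \<le> snd (hd ds)" using v by (simp add: valid_params_def)
    then have "2 \<le> snd (ds ! 0)" using ne by (simp add: hd_conv_nth)
    then have "Piv 0 0 \<in> pivs ds" "Piv 0 1 \<in> pivs ds" using ne by (auto simp: pivs_def)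
    then show ?thesis by (rule that) simp
  qed
  then have "card {a, b} \<le> card (pivs ds)" by (intro card_mono pivs_finite) auto
  then show ?thesis using ab by simp
qed

lemma HS_eq: "HS ds q n = ((pivs ds - {P0}) \<times> {..<n - 1}) \<union> (Hair ` {..<q} \<times> {..<n})"
  unfolding HS_def by blast

lemma HS_finite: "finite (HS ds q n)"
  by (simp add: HS_eq pivs_finite)

lemma card_HS: "valid_params ds \<Longrightarrow> card (HS ds q n) = (card (pivs ds) - 1) * (n - 1) + q * n"
proof -
  assume v: "valid_params ds"
  have hp: "Hair h \<notin> pivs ds" for h by (simp add: pivs_def)
  have d: "((pivs ds - {P0}) \<times> {..<n - 1}) \<inter> (Hair ` {..<q} \<times> {..<n}) = {}"
    using hp by (simp add: Times_Int_Times) blast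
  have "card (HS ds q n) = card ((pivs ds - {P0}) \<times> {..<n - 1}) + card (Hair ` {..<q} \<times> {..<n})"
    unfolding HS_eq by (rule card_Un_disjoint[OF _ _ d]) (simp_all add: pivs_finite)
  also have "\<dots> = (card (pivs ds) - 1) * (n - 1) + q * n"
  proof -
    have "card (Hair ` {..<q}) = q" by (simp add: card_image inj_on_def)
    then show ?thesis using P0_pivs[OF v] pivs_finite[of ds] by (simp add: card_cartesian_product)
  qed
  finally show ?thesis .
qed

lemma key_iso:
  assumes v: "valid_params ds" and n: "0 < n"
  shows "iso_to_finite_index_subgroup (tree_raag ds (card (HS ds q n))) (tree_raag ds q)"
proof -
  obtain enc where e: "bij_betw enc (HS ds q n) {0..<card (HS ds q n)}"
    using ex_bij_betw_finite_nat[OF HS_finite] by blast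
  then have e': "bij_betw enc (HS ds q n) {..<card (HS ds q n)}" by (simp add: atLeast0LessThan)
  interpret c: cfg ds q n enc using v n e' by unfold_locales
  show ?thesis by (rule c.main_iso)
qed

theorem mainTheorem7:
  fixes ds :: "(nat \<times> nat) list" and p q :: nat
  assumes "valid_params ds"
  shows "\<exists>r::nat. iso_to_finite_index_subgroup (tree_raag ds r) (tree_raag ds q)
                \<and> iso_to_finite_index_subgroup (tree_raag ds r) (tree_raag ds p)
          \<and> commensurable (tree_raag ds q) (tree_raag ds p)"
proof -
  define M where "M = card (pivs ds) - 1"
  have M: "1 \<le> M" using two_pivs[OF assms] by (simp add: M_def)
  have e: "card (HS ds q (M + p)) = card (HS ds p (M + q))"
  proof -
    obtain m where m: "M = Suc m" using M by (cases M) auto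
    have "card (HS ds q (M + p)) = M * (M + p - 1) + q * (M + p)"
      using card_HS[OF assms, of q "M + p"] by (simp add: M_def)
    also have "\<dots> = M * (M + q - 1) + p * (M + q)"
      using m by (simp add: algebra_simps)
    also have "\<dots> = card (HS ds p (M + q))"
      using card_HS[OF assms, of p "M + q"] by (simp add: M_def)
    finally show ?thesis .
  qed
  let ?r = "card (HS ds q (M + p))"
  have i1: "iso_to_finite_index_subgroup (tree_raag ds ?r) (tree_raag ds q)"
    using key_iso[OF assms, of "M + p" q] M by simp
  have i2: "iso_to_finite_index_subgroup (tree_raag ds ?r) (tree_raag ds p)"
    using key_iso[OF assms, of "M + q" p] M e by simp
  obtain H1 where H1: "finite_index_subgroup H1 (tree_raag ds q)"
    "tree_raag ds ?r \<cong> (tree_raag ds q)\<lparr>carrier := H1\<rparr>"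
    using i1 by (auto simp: iso_to_finite_index_subgroup_def)
  obtain H2 where H2: "finite_index_subgroup H2 (tree_raag ds p)"
    "tree_raag ds ?r \<cong> (tree_raag ds p)\<lparr>carrier := H2\<rparr>"
    using i2 by (auto simp: iso_to_finite_index_subgroup_def)
  have g: "group (tree_raag ds ?r)" by (simp add: tree_raag_def raag_group)
  have "(tree_raag ds q)\<lparr>carrier := H1\<rparr> \<cong> (tree_raag ds p)\<lparr>carrier := H2\<rparr>"
    using iso_trans[OF group.iso_sym[OF g H1(2)] H2(2)] .
  then have "commensurable (tree_raag ds q) (tree_raag ds p)"
    using H1(1) H2(1) by (auto simp: commensurable_def)
  then show ?thesis using i1 i2 by blast
qed


end
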